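(* Let $\mathcal I$ be uniformly distributed on $V$, independent of the environment. The total variation distance between the law of the random vector $(n\pi_t(\mathcal I))_{0\le t\le h}$ and the law of $(M_t)_{0\le t\le h}$ is less than $\frac{\Delta^{2h+3}}{m}$.
   Context: Configuration model: $(d_i^-)_{1\le i\le n}$, $(d_i^+)_{1\le i\le n}$ positive integers with $\sum_id_i^-=\sum_id_i^+=m$; each vertex $i\in V=\{1,\dots,n\}$ carries a set $E_i^+$ of $d_i^+$ tails and $E_i^-$ of $d_i^-$ heads; $\omega$ is a uniformly random bijection from tails to heads, $\omega(e)=f$ an arc from the vertex of $e$ to that of $f$; $P(i,j)=\frac1{d_i^+}|\{e\in E_i^+:\omega(e)\in E_j^-\}|$. Assume $\min_i\min(d_i^+,d_i^-)\ge2$; $\Delta:=\max_i\max(d_i^+,d_i^-)$, $h=\lfloor\frac{\ln n}{10\ln\Delta}\rfloor$, $\pi_0(i)=d_i^-/m$, $\pi_t=\pi_0P^t$. Branching process $\mathcal T_\star$: the root $o$ (generation $0$) has mark uniform on $V$; each node $x$ of generation $t$, with mark $i(x)$, independently has exactly $d^-_{i(x)}$ children forming generation $t+1$, whose marks are i.i.d. with the out-degree distribution $\mathbf P(\text{mark}=i)=d_i^+/m$. For a node $x$ of generation $t$ with path $x=x_0,x_1,\dots,x_t=o$ to the root, $\mathbf w(x)=\frac{n d^-_{i(x_0)}}{m}\prod_{k=0}^{t-1}\frac1{d^+_{i(x_k)}}$ (empty product $=1$), and $M_t=\sum_{x\text{ in generation }t}\mathbf w(x)$. *)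

theory Defs
  imports "HOL-Probability.Probability"
begin

definition Tails :: "nat \<Rightarrow> (nat \<Rightarrow> nat) \<Rightarrow> (nat \<times> nat) set" where
  "Tails n dout = {(i,k). i < n \<and> k < dout i}"

definition Heads :: "nat \<Rightarrow> (nat \<Rightarrow> nat) \<Rightarrow> (nat \<times> nat) set" where
  "Heads n din = {(j,l). j < n \<and> l < din j}"

text \<open>Configurations: bijections from tails to heads (extensional, so the set is finite).\<close>
definition configs :: "nat \<Rightarrow> (nat \<Rightarrow> nat) \<Rightarrow> (nat \<Rightarrow> nat) \<Rightarrow> (nat \<times> nat \<Rightarrow> nat \<times> nat) set" where
  "configs n din dout =
     {\<omega> \<in> Tails n dout \<rightarrow>\<^sub>E Heads n din. bij_betw \<omega> (Tails n dout) (Heads n din)}"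

definition config_pmf :: "nat \<Rightarrow> (nat \<Rightarrow> nat) \<Rightarrow> (nat \<Rightarrow> nat) \<Rightarrow> (nat \<times> nat \<Rightarrow> nat \<times> nat) pmf" where
  "config_pmf n din dout = pmf_of_set (configs n din dout)"

definition Pmat :: "(nat \<Rightarrow> nat) \<Rightarrow> (nat \<times> nat \<Rightarrow> nat \<times> nat) \<Rightarrow> nat \<Rightarrow> nat \<Rightarrow> real" where
  "Pmat dout \<omega> i j = real (card {k. k < dout i \<and> fst (\<omega> (i,k)) = j}) / real (dout i)"

fun pi_t :: "nat \<Rightarrow> (nat \<Rightarrow> nat) \<Rightarrow> (nat \<Rightarrow> nat) \<Rightarrow> (nat \<times> nat \<Rightarrow> nat \<times> nat) \<Rightarrow> nat \<Rightarrow> nat \<Rightarrow> real" where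
  "pi_t n din dout \<omega> 0 j = real (din j) / real (\<Sum>i<n. din i)"
| "pi_t n din dout \<omega> (Suc t) j = (\<Sum>i<n. pi_t n din dout \<omega> t i * Pmat dout \<omega> i j)"

definition env_law :: "nat \<Rightarrow> (nat \<Rightarrow> nat) \<Rightarrow> (nat \<Rightarrow> nat) \<Rightarrow> nat \<Rightarrow> real list pmf" where
  "env_law n din dout h =
     bind_pmf (config_pmf n din dout) (\<lambda>\<omega>.
       map_pmf (\<lambda>I. map (\<lambda>t. real n * pi_t n din dout \<omega> t I) [0..<Suc h]) (pmf_of_set {..<n}))"

text \<open>Mark distribution P(mark = i) = dout i / m, realised as the vertex of a uniform tail.\<close>
definition mark_pmf :: "nat \<Rightarrow> (nat \<Rightarrow> nat) \<Rightarrow> nat pmf" where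
  "mark_pmf n dout = map_pmf fst (pmf_of_set (Tails n dout))"

fun iid_list :: "nat \<Rightarrow> 'a pmf \<Rightarrow> 'a list pmf" where
  "iid_list 0 p = return_pmf []"
| "iid_list (Suc k) p = bind_pmf p (\<lambda>x. map_pmf (Cons x) (iid_list k p))"

text \<open>A generation is a list of nodes (mark, a) where a is the product of 1/dout over the
node and its ancestors, the root excluded. Each node of mark i independently gets din i
children with i.i.d. marks.\<close>
fun next_gen :: "nat \<Rightarrow> (nat \<Rightarrow> nat) \<Rightarrow> (nat \<Rightarrow> nat) \<Rightarrow> (nat \<times> real) list \<Rightarrow> (nat \<times> real) list pmf" where
  "next_gen n din dout [] = return_pmf []"
| "next_gen n din dout ((i,a) # xs) =
     bind_pmf (iid_list (din i) (mark_pmf n dout)) (\<lambda>cs.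
       map_pmf (\<lambda>rest. map (\<lambda>j. (j, a / real (dout j))) cs @ rest) (next_gen n din dout xs))"

fun gens :: "nat \<Rightarrow> (nat \<Rightarrow> nat) \<Rightarrow> (nat \<Rightarrow> nat) \<Rightarrow> nat \<Rightarrow> (nat \<times> real) list list pmf" where
  "gens n din dout 0 = map_pmf (\<lambda>i. [[(i, 1)]]) (pmf_of_set {..<n})"
| "gens n din dout (Suc t) =
     bind_pmf (gens n din dout t) (\<lambda>gs. map_pmf (\<lambda>g. gs @ [g]) (next_gen n din dout (last gs)))"

definition M_law :: "nat \<Rightarrow> (nat \<Rightarrow> nat) \<Rightarrow> (nat \<Rightarrow> nat) \<Rightarrow> nat \<Rightarrow> real list pmf" where
  "M_law n din dout h =
     map_pmf (\<lambda>gs. map (\<lambda>g. sum_list (map (\<lambda>(i,a). real n * real (din i) / real (\<Sum>k<n. din k) * a) g)) gs)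
       (gens n din dout h)"

definition tv_dist :: "'a pmf \<Rightarrow> 'a pmf \<Rightarrow> real" where
  "tv_dist p q = (SUP A. \<bar>measure_pmf.prob p A - measure_pmf.prob q A\<bar>)"

end

theory Submission
  imports Defs
begin



definition bijs :: "'a set \<Rightarrow> 'b set \<Rightarrow> ('a \<Rightarrow> 'b) set" where
  "bijs A B = {f \<in> A \<rightarrow>\<^sub>E B. bij_betw f A B}"

lemma finite_bijs: "finite A \<Longrightarrow> finite B \<Longrightarrow> finite (bijs A B)"
  unfolding bijs_def by (rule finite_subset[of _ "A \<rightarrow>\<^sub>E B"]) (auto intro: finite_PiE)

lemma card_bijs:
  assumes "finite A" "finite B" "card A = card B"
  shows "card (bijs A B) = fact (card A)"
  using assms
proof (induction A arbitrary: B rule: finite_induct)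
  case empty
  then have "B = {}" by auto
  then show ?case by (simp add: bijs_def bij_betw_def)
next
  case (insert a A B)
  define S where "S = Sigma B (\<lambda>b. bijs A (B - {b}))"
  have "bij_betw (\<lambda>f. (f a, restrict f A)) (bijs (insert a A) B) S"
  proof (rule bij_betw_byWitness[where f' = "\<lambda>(b,g). g(a := b)"])
    show "\<forall>f\<in>bijs (insert a A) B. (\<lambda>(b, g). g(a := b)) (f a, restrict f A) = f"
      using insert.hyps by (auto simp: bijs_def fun_eq_iff PiE_def extensional_def)
    show "\<forall>x\<in>S. (\<lambda>f. (f a, restrict f A)) ((\<lambda>(b, g). g(a := b)) x) = x"
      using insert.hyps by (auto simp: S_def bijs_def fun_eq_iff PiE_def extensional_def)
    show "(\<lambda>f. (f a, restrict f A)) ` bijs (insert a A) B \<subseteq> S"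
    proof
      fix y assume "y \<in> (\<lambda>f. (f a, restrict f A)) ` bijs (insert a A) B"
      then obtain f where f: "f \<in> bijs (insert a A) B" and y: "y = (f a, restrict f A)" by auto
      have bf: "bij_betw f (insert a A) B" and fe: "f \<in> insert a A \<rightarrow>\<^sub>E B" using f by (auto simp: bijs_def)
      have inj: "inj_on f (insert a A)" and im: "f ` insert a A = B" using bf by (auto simp: bij_betw_def)
      have "f a \<notin> f ` A" using inj insert.hyps by auto
      then have "f ` A = B - {f a}" using im by force
      then have bA: "bij_betw f A (B - {f a})" using inj unfolding bij_betw_def
        using inj_on_insert by blast
      then have "bij_betw (restrict f A) A (B - {f a})"
        using bij_betw_cong[of A "restrict f A" f] by simp
      moreover have "restrict f A \<in> A \<rightarrow>\<^sub>E B - {f a}"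
        using bA by (simp add: bij_betw_imp_funcset)
      moreover have "f a \<in> B" using fe by blast
      ultimately show "y \<in> S" unfolding y S_def bijs_def by blast
    qed
    show "(\<lambda>(b, g). g(a := b)) ` S \<subseteq> bijs (insert a A) B"
    proof
      fix f assume "f \<in> (\<lambda>(b, g). g(a := b)) ` S"
      then obtain b g where b: "b \<in> B" and g: "g \<in> bijs A (B - {b})" and f: "f = g(a := b)"
        by (auto simp: S_def)
      have bg: "bij_betw g A (B - {b})" and ge: "g \<in> A \<rightarrow>\<^sub>E B - {b}" using g by (auto simp: bijs_def)
      have "bij_betw (g(a:=b)) A (B - {b})"
        using bg insert.hyps bij_betw_cong[of A "g(a:=b)" g "B - {b}"] by fastforce
      then have "bij_betw (g(a:=b)) (insert a A) (insert b (B - {b}))"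
        using insert.hyps unfolding bij_betw_def by (auto simp: inj_on_insert)
      moreover have "insert b (B - {b}) = B" using b by auto
      moreover have "g(a:=b) \<in> insert a A \<rightarrow>\<^sub>E B"
        using ge b insert.hyps by (auto simp: PiE_def extensional_def)
      ultimately show "f \<in> bijs (insert a A) B" unfolding f bijs_def by auto
    qed
  qed
  then have "card (bijs (insert a A) B) = card S" by (rule bij_betw_same_card)
  also have "card S = (\<Sum>b\<in>B. card (bijs A (B - {b})))"
    unfolding S_def using insert.prems by (intro card_SigmaI) (auto intro: finite_bijs insert.hyps)
  also have "\<dots> = (\<Sum>b\<in>B. fact (card A))"
    using insert by (intro sum.cong refl insert.IH) auto
  also have "\<dots> = card B * fact (card A)" by simp
  also have "\<dots> = fact (card (insert a A))"
    using insert by (metis card_insert_disjoint fact_Suc of_nat_id)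
  finally show ?case .
qed




lemma card_bijs_constr:
  assumes A: "finite A" and B: "finite B" and AB: "card A = card B" and J: "finite J"
    and ia: "inj_on \<alpha> J" and ib: "inj_on \<beta> J" and sa: "\<alpha> ` J \<subseteq> A" and sb: "\<beta> ` J \<subseteq> B"
  shows "card {f \<in> bijs A B. \<forall>j\<in>J. f (\<alpha> j) = \<beta> j} = fact (card A - card J)"
proof -
  define A' where "A' = A - \<alpha> ` J"
  define B' where "B' = B - \<beta> ` J"
  define ext where "ext = (\<lambda>g x. if x \<in> \<alpha> ` J then \<beta> (the_inv_into J \<alpha> x) else g x)"
  have cA': "card A' = card A - card J"
    unfolding A'_def using sa A by (simp add: card_Diff_subset card_image ia finite_subset)
  have cB': "card B' = card B - card J"
    unfolding B'_def using sb B by (simp add: card_Diff_subset card_image ib finite_subset)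
  have ext_a: "ext g (\<alpha> j) = \<beta> j" if "j \<in> J" for g j
    using that ia by (simp add: ext_def the_inv_into_f_f)
  have "bij_betw (\<lambda>f. restrict f A') {f \<in> bijs A B. \<forall>j\<in>J. f (\<alpha> j) = \<beta> j} (bijs A' B')"
  proof (rule bij_betw_byWitness[where f' = "\<lambda>g. restrict (ext g) A"])
    show "\<forall>f\<in>{f \<in> bijs A B. \<forall>j\<in>J. f (\<alpha> j) = \<beta> j}. restrict (ext (restrict f A')) A = f"
    proof safe
      fix f assume f: "f \<in> bijs A B" and c: "\<forall>j\<in>J. f (\<alpha> j) = \<beta> j"
      show "restrict (ext (restrict f A')) A = f"
      proof
        fix x show "restrict (ext (restrict f A')) A x = f x"
        proof (cases "x \<in> A")
          case False then show ?thesis using f by (auto simp: bijs_def PiE_def extensional_def)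
        next
          case True
          show ?thesis
          proof (cases "x \<in> \<alpha> ` J")
            case True2: True
            then obtain j where j: "j \<in> J" "x = \<alpha> j" by auto
            then show ?thesis using True ext_a c by auto
          next
            case False
            then show ?thesis using True by (auto simp: ext_def A'_def)
          qed
        qed
      qed
    qed
    show "\<forall>g\<in>bijs A' B'. restrict (restrict (ext g) A) A' = g"
    proof safe
      fix g assume g: "g \<in> bijs A' B'"
      show "restrict (restrict (ext g) A) A' = g"
      proof
        fix x show "restrict (restrict (ext g) A) A' x = g x"
          using g by (cases "x \<in> A'") (auto simp: bijs_def PiE_def extensional_def A'_def ext_def)
      qed
    qed
    show "(\<lambda>f. restrict f A') ` {f \<in> bijs A B. \<forall>j\<in>J. f (\<alpha> j) = \<beta> j} \<subseteq> bijs A' B'"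
    proof safe
      fix f assume f: "f \<in> bijs A B" and c: "\<forall>j\<in>J. f (\<alpha> j) = \<beta> j"
      have bf: "bij_betw f A B" using f by (simp add: bijs_def)
      have imJ: "f ` (\<alpha> ` J) = \<beta> ` J" using c by force
      have "bij_betw f A' B'"
        unfolding A'_def B'_def using bij_betw_DiffI[OF bf, of "\<alpha> ` J" "\<beta> ` J"] sa sb imJ
          bij_betw_subset[OF bf sa] by auto
      then have "bij_betw (restrict f A') A' B'"
        using bij_betw_cong[of A' "restrict f A'" f B'] by simp
      moreover have "restrict f A' \<in> A' \<rightarrow>\<^sub>E B'"
        using \<open>bij_betw f A' B'\<close> by (simp add: bij_betw_imp_funcset)
      ultimately show "restrict f A' \<in> bijs A' B'" by (simp add: bijs_def)
    qed
    show "(\<lambda>g. restrict (ext g) A) ` bijs A' B' \<subseteq> {f \<in> bijs A B. \<forall>j\<in>J. f (\<alpha> j) = \<beta> j}"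
    proof safe
      fix g assume g: "g \<in> bijs A' B'"
      have bg: "bij_betw g A' B'" and ge: "g \<in> A' \<rightarrow>\<^sub>E B'" using g by (auto simp: bijs_def)
      have b1: "bij_betw (ext g) (\<alpha> ` J) (\<beta> ` J)"
      proof -
        have "bij_betw (\<beta> \<circ> the_inv_into J \<alpha>) (\<alpha> ` J) (\<beta> ` J)"
          using bij_betw_the_inv_into[OF inj_on_imp_bij_betw[OF ia]] inj_on_imp_bij_betw[OF ib]
          by (rule bij_betw_trans)
        then show ?thesis
          using bij_betw_cong[of "\<alpha> ` J" "ext g" "\<beta> \<circ> the_inv_into J \<alpha>" "\<beta> ` J"]
          by (simp add: ext_def)
      qed
      have b2: "bij_betw (ext g) A' B'"
        using bg bij_betw_cong[of A' "ext g" g B'] by (simp add: ext_def A'_def)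
      have "bij_betw (ext g) (\<alpha> ` J \<union> A') (\<beta> ` J \<union> B')"
        by (rule bij_betw_combine[OF b1 b2]) (auto simp: B'_def)
      moreover have "\<alpha> ` J \<union> A' = A" "\<beta> ` J \<union> B' = B" using sa sb by (auto simp: A'_def B'_def)
      ultimately have "bij_betw (ext g) A B" by simp
      then have bA: "bij_betw (restrict (ext g) A) A B"
        using bij_betw_cong[of A "restrict (ext g) A" "ext g" B] by simp
      moreover have "restrict (ext g) A \<in> A \<rightarrow>\<^sub>E B"
        using \<open>bij_betw (ext g) A B\<close> by (simp add: bij_betw_imp_funcset)
      ultimately show "restrict (ext g) A \<in> bijs A B" by (simp add: bijs_def)
      fix j assume "j \<in> J"
      then show "restrict (ext g) A (\<alpha> j) = \<beta> j" using ext_a sa by auto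
    qed
  qed
  then have "card {f \<in> bijs A B. \<forall>j\<in>J. f (\<alpha> j) = \<beta> j} = card (bijs A' B')"
    by (rule bij_betw_same_card)
  also have "\<dots> = fact (card A')"
    using A B AB cA' cB' by (intro card_bijs) (auto simp: A'_def B'_def)
  finally show ?thesis using cA' by simp
qed




lemma pmf_ge_measure_aux:
  assumes fin: "finite (set_pmf \<nu>)" and G: "\<forall>b\<in>G. pmf \<nu> b \<le> pmf \<mu> b"
  shows "measure_pmf.prob \<mu> X \<ge> measure_pmf.prob \<nu> X - measure_pmf.prob \<nu> (-G)"
proof -
  let ?Y = "X \<inter> G \<inter> set_pmf \<nu>"
  have "measure_pmf.prob \<nu> X \<le> measure_pmf.prob \<nu> (X \<inter> G) + measure_pmf.prob \<nu> (-G)"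
    using measure_subadditive[of "X \<inter> G" "measure_pmf \<nu>" "-G"]
      measure_pmf.finite_measure_mono[of X "(X \<inter> G) \<union> (-G)" \<nu>] by fastforce
  moreover have "measure_pmf.prob \<nu> (X \<inter> G) = measure_pmf.prob \<nu> ?Y"
    using measure_Int_set_pmf[of \<nu> "X \<inter> G"] by (simp add: Int_assoc)
  moreover have "measure_pmf.prob \<nu> ?Y = sum (pmf \<nu>) ?Y"
    using fin by (intro measure_measure_pmf_finite) auto
  moreover have "sum (pmf \<nu>) ?Y \<le> sum (pmf \<mu>) ?Y"
    using G by (intro sum_mono) auto
  moreover have "sum (pmf \<mu>) ?Y = measure_pmf.prob \<mu> ?Y"
    using fin by (intro measure_measure_pmf_finite[symmetric]) auto
  moreover have "measure_pmf.prob \<mu> ?Y \<le> measure_pmf.prob \<mu> X"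
    by (intro measure_pmf.finite_measure_mono) auto
  ultimately show ?thesis by linarith
qed

lemma tv_map_le:
  assumes fin: "finite (set_pmf \<nu>)" and G: "\<forall>b\<in>G. pmf \<nu> b \<le> pmf \<mu> b"
  shows "tv_dist (map_pmf g \<mu>) (map_pmf g \<nu>) \<le> measure_pmf.prob \<nu> (-G)"
  unfolding tv_dist_def
proof (rule cSUP_least)
  fix A
  let ?S = "g -` A"
  have m1: "measure_pmf.prob (map_pmf g \<mu>) A = measure_pmf.prob \<mu> ?S"
    by simp
  have m2: "measure_pmf.prob (map_pmf g \<nu>) A = measure_pmf.prob \<nu> ?S"
    by simp
  have a: "measure_pmf.prob \<mu> ?S \<ge> measure_pmf.prob \<nu> ?S - measure_pmf.prob \<nu> (-G)"
    by (rule pmf_ge_measure_aux[OF fin G])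
  have b: "measure_pmf.prob \<mu> (-?S) \<ge> measure_pmf.prob \<nu> (-?S) - measure_pmf.prob \<nu> (-G)"
    by (rule pmf_ge_measure_aux[OF fin G])
  have c1: "measure_pmf.prob \<mu> (-?S) = 1 - measure_pmf.prob \<mu> ?S"
    using measure_pmf.prob_compl[of ?S \<mu>] by (simp add: Compl_eq_Diff_UNIV)
  have c2: "measure_pmf.prob \<nu> (-?S) = 1 - measure_pmf.prob \<nu> ?S"
    using measure_pmf.prob_compl[of ?S \<nu>] by (simp add: Compl_eq_Diff_UNIV)
  show "\<bar>measure_pmf.prob (map_pmf g \<mu>) A - measure_pmf.prob (map_pmf g \<nu>) A\<bar> \<le> measure_pmf.prob \<nu> (-G)"
    unfolding m1 m2 using a b c1 c2 by linarith
qed simp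

lemma Pi_pmf_two_components:
  assumes "finite A" "q1 \<in> A" "q2 \<in> A" "q1 \<noteq> q2"
  shows "map_pmf (\<lambda>f. (f q1, f q2)) (Pi_pmf A d p) = pair_pmf (p q1) (p q2)"
proof -
  have A: "A = insert q1 (A - {q1})" using assms by auto
  have "Pi_pmf A d p = map_pmf (\<lambda>(y,f). f(q1:=y)) (pair_pmf (p q1) (Pi_pmf (A - {q1}) d p))"
    by (subst A, rule Pi_pmf_insert) (use assms in auto)
  then have "map_pmf (\<lambda>f. (f q1, f q2)) (Pi_pmf A d p)
     = map_pmf (\<lambda>(y,f). (y, f q2)) (pair_pmf (p q1) (Pi_pmf (A - {q1}) d p))"
    using assms by (simp add: pmf.map_comp o_def case_prod_unfold)
  also have "\<dots> = pair_pmf (map_pmf id (p q1)) (map_pmf (\<lambda>f. f q2) (Pi_pmf (A - {q1}) d p))"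
    by (subst map_pair[symmetric]) (simp add: case_prod_unfold id_def)
  also have "map_pmf (\<lambda>f. f q2) (Pi_pmf (A - {q1}) d p) = p q2"
    using assms by (subst Pi_pmf_component) auto
  finally show ?thesis by simp
qed




fun vT :: "nat \<Rightarrow> (nat list \<Rightarrow> nat \<times> nat) \<Rightarrow> nat list \<Rightarrow> nat" where
  "vT I \<tau> [] = I"
| "vT I \<tau> (c # p) = fst (\<tau> (c # p))"

fun actT :: "(nat \<Rightarrow> nat) \<Rightarrow> nat \<Rightarrow> (nat list \<Rightarrow> nat \<times> nat) \<Rightarrow> nat list \<Rightarrow> bool" where
  "actT din I \<tau> [] = True"
| "actT din I \<tau> (c # p) = (actT din I \<tau> p \<and> c < din (vT I \<tau> p))"

fun vG :: "nat \<Rightarrow> (nat \<times> nat \<Rightarrow> nat \<times> nat) \<Rightarrow> nat list \<Rightarrow> nat" where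
  "vG I \<sigma> [] = I"
| "vG I \<sigma> (c # p) = fst (\<sigma> (vG I \<sigma> p, c))"

fun actG :: "(nat \<Rightarrow> nat) \<Rightarrow> nat \<Rightarrow> (nat \<times> nat \<Rightarrow> nat \<times> nat) \<Rightarrow> nat list \<Rightarrow> bool" where
  "actG din I \<sigma> [] = True"
| "actG din I \<sigma> (c # p) = (actG din I \<sigma> p \<and> c < din (vG I \<sigma> p))"

definition PosS :: "nat \<Rightarrow> nat \<Rightarrow> nat list set" where
  "PosS D h = {p. 1 \<le> length p \<and> length p \<le> h \<and> set p \<subseteq> {..<D}}"

definition phi :: "nat list set \<Rightarrow> (nat \<Rightarrow> nat) \<Rightarrow> nat \<Rightarrow> (nat \<times> nat \<Rightarrow> nat \<times> nat)
    \<Rightarrow> (nat list \<Rightarrow> nat \<times> nat) \<Rightarrow> nat list \<Rightarrow> nat \<times> nat" where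
  "phi P din I \<sigma> \<tau>c q = (if q \<in> P \<and> actG din I \<sigma> q then \<sigma> (vG I \<sigma> (tl q), hd q) else \<tau>c q)"

definition childsT :: "(nat \<Rightarrow> nat) \<Rightarrow> (nat \<Rightarrow> nat) \<Rightarrow> (nat list \<Rightarrow> nat \<times> nat)
    \<Rightarrow> (nat list \<times> nat \<times> real) list \<Rightarrow> (nat list \<times> nat \<times> real) list" where
  "childsT din dout \<tau> L = concat (map (\<lambda>(p,v,a). map (\<lambda>c. (c # p, fst (\<tau> (c # p)),
       a / real (dout (fst (\<tau> (c # p)))))) [0..<din v]) L)"

fun genT :: "(nat \<Rightarrow> nat) \<Rightarrow> (nat \<Rightarrow> nat) \<Rightarrow> nat \<Rightarrow> (nat list \<Rightarrow> nat \<times> nat) \<Rightarrow> nat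
    \<Rightarrow> (nat list \<times> nat \<times> real) list" where
  "genT din dout I \<tau> 0 = [([], I, 1)]"
| "genT din dout I \<tau> (Suc t) = childsT din dout \<tau> (genT din dout I \<tau> t)"

definition childsG :: "(nat \<Rightarrow> nat) \<Rightarrow> (nat \<Rightarrow> nat) \<Rightarrow> (nat \<times> nat \<Rightarrow> nat \<times> nat)
    \<Rightarrow> (nat list \<times> nat \<times> real) list \<Rightarrow> (nat list \<times> nat \<times> real) list" where
  "childsG din dout \<sigma> L = concat (map (\<lambda>(p,v,a). map (\<lambda>c. (c # p, fst (\<sigma> (v, c)),
       a / real (dout (fst (\<sigma> (v, c)))))) [0..<din v]) L)"

fun genG :: "(nat \<Rightarrow> nat) \<Rightarrow> (nat \<Rightarrow> nat) \<Rightarrow> nat \<Rightarrow> (nat \<times> nat \<Rightarrow> nat \<times> nat) \<Rightarrow> nat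
    \<Rightarrow> (nat list \<times> nat \<times> real) list" where
  "genG din dout I \<sigma> 0 = [([], I, 1)]"
| "genG din dout I \<sigma> (Suc t) = childsG din dout \<sigma> (genG din dout I \<sigma> t)"

lemma genG_inv:
  assumes I: "I < n" and Hs: "\<And>v c. v < n \<Longrightarrow> c < din v \<Longrightarrow> fst (\<sigma> (v, c)) < n"
    and D: "\<And>v. v < n \<Longrightarrow> din v \<le> D"
  shows "(p, v, a) \<in> set (genG din dout I \<sigma> t) \<Longrightarrow>
     length p = t \<and> actG din I \<sigma> p \<and> vG I \<sigma> p = v \<and> v < n \<and> set p \<subseteq> {..<D}"
proof (induction t arbitrary: p v a)
  case 0
  then show ?case using I by auto
next
  case (Suc t)
  from Suc.prems obtain p' v' a' c where n': "(p', v', a') \<in> set (genG din dout I \<sigma> t)"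
    and c: "c < din v'" and eq: "p = c # p'" "v = fst (\<sigma> (v', c))"
    by (auto simp: childsG_def)
  from Suc.IH[OF n'] have ih: "length p' = t" "actG din I \<sigma> p'" "vG I \<sigma> p' = v'" "v' < n" "set p' \<subseteq> {..<D}"
    by auto
  have "c < D" using c D[OF ih(4)] by simp
  then show ?case using ih c eq Hs[OF ih(4) c] by auto
qed

lemma genG_eq_genT:
  assumes I: "I < n" and Hs: "\<And>v c. v < n \<Longrightarrow> c < din v \<Longrightarrow> fst (\<sigma> (v, c)) < n"
    and D: "\<And>v. v < n \<Longrightarrow> din v \<le> D"
  shows "t \<le> h \<Longrightarrow> genG din dout I \<sigma> t = genT din dout I (phi (PosS D h) din I \<sigma> \<tau>c) t"
proof (induction t)
  case 0
  then show ?case by simp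
next
  case (Suc t)
  have ih: "genG din dout I \<sigma> t = genT din dout I (phi (PosS D h) din I \<sigma> \<tau>c) t"
    using Suc by simp
  have "childsG din dout \<sigma> (genG din dout I \<sigma> t) =
        childsT din dout (phi (PosS D h) din I \<sigma> \<tau>c) (genG din dout I \<sigma> t)"
    unfolding childsG_def childsT_def
  proof (intro arg_cong[where f = concat] map_cong refl)
    fix x assume nd0: "x \<in> set (genG din dout I \<sigma> t)"
    obtain p v a where x: "x = (p, v, a)" by (cases x) auto
    have nd: "(p, v, a) \<in> set (genG din dout I \<sigma> t)" using nd0 x by simp
    from genG_inv[OF I Hs D nd] have inv: "length p = t" "actG din I \<sigma> p" "vG I \<sigma> p = v" "v < n"
      "set p \<subseteq> {..<D}" by auto
    have "phi (PosS D h) din I \<sigma> \<tau>c (c # p) = \<sigma> (v, c)" if c: "c < din v" for c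
    proof -
      have "c < D" using c D[OF inv(4)] by simp
      then have "c # p \<in> PosS D h" using inv Suc.prems by (auto simp: PosS_def)
      then show ?thesis using inv c by (simp add: phi_def)
    qed
    then show "(\<lambda>(p,v,a). map (\<lambda>c. (c # p, fst (\<sigma> (v, c)), a / real (dout (fst (\<sigma> (v, c)))))) [0..<din v]) x =
      (\<lambda>(p,v,a). map (\<lambda>c. (c # p, fst (phi (PosS D h) din I \<sigma> \<tau>c (c # p)),
       a / real (dout (fst (phi (PosS D h) din I \<sigma> \<tau>c (c # p)))))) [0..<din v]) x"
      unfolding x by (auto intro!: map_cong)
  qed
  then show ?case using ih by simp
qed

definition Rop :: "(nat \<Rightarrow> nat) \<Rightarrow> (nat \<Rightarrow> nat) \<Rightarrow> (nat \<times> nat \<Rightarrow> nat \<times> nat) \<Rightarrow> (nat \<Rightarrow> real) \<Rightarrow> nat \<Rightarrow> real" where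
  "Rop din dout \<sigma> f v = (\<Sum>c<din v. f (fst (\<sigma> (v, c))) / real (dout (fst (\<sigma> (v, c)))))"

definition Wsum :: "(nat \<Rightarrow> real) \<Rightarrow> (nat list \<times> nat \<times> real) list \<Rightarrow> real" where
  "Wsum f L = sum_list (map (\<lambda>(p,v,a). a * f v) L)"

lemma Wsum_childsG: "Wsum f (childsG din dout \<sigma> L) = Wsum (Rop din dout \<sigma> f) L"
proof (induction L)
  case Nil
  then show ?case by (simp add: Wsum_def childsG_def)
next
  case (Cons x L)
  obtain p v a where x: "x = (p, v, a)" by (cases x) auto
  have "sum_list (map (\<lambda>(p, v, a). a * f v) (map (\<lambda>c. (c # p, fst (\<sigma> (v, c)),
       a / real (dout (fst (\<sigma> (v, c)))))) [0..<din v]))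
     = (\<Sum>c<din v. a / real (dout (fst (\<sigma> (v, c)))) * f (fst (\<sigma> (v, c))))"
    by (simp add: o_def sum_list_sum_nth atLeast0LessThan)
  also have "\<dots> = a * Rop din dout \<sigma> f v"
    by (simp add: Rop_def sum_distrib_left)
  finally show ?case using Cons by (simp add: x Wsum_def childsG_def)
qed

lemma Wsum_genG: "Wsum f (genG din dout I \<sigma> t) = ((Rop din dout \<sigma>) ^^ t) f I"
proof (induction t arbitrary: f)
  case 0
  then show ?case by (simp add: Wsum_def)
next
  case (Suc t)
  then show ?case by (simp add: Wsum_childsG funpow_swap1)
qed




lemma Tails_Sigma: "Tails n dout = Sigma {..<n} (\<lambda>i. {..<dout i})"
  by (auto simp: Tails_def)
lemma Heads_Sigma: "Heads n din = Sigma {..<n} (\<lambda>i. {..<din i})"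
  by (auto simp: Heads_def)
lemma finite_Tails: "finite (Tails n dout)" by (simp add: Tails_Sigma)
lemma finite_Heads: "finite (Heads n din)" by (simp add: Heads_Sigma)
lemma card_Tails: "card (Tails n dout) = (\<Sum>i<n. dout i)"
  by (simp add: Tails_Sigma card_SigmaI)
lemma card_Heads: "card (Heads n din) = (\<Sum>i<n. din i)"
  by (simp add: Heads_Sigma card_SigmaI)
lemma configs_bijs: "configs n din dout = bijs (Tails n dout) (Heads n din)"
  by (simp add: configs_def bijs_def)

lemma sigma_bij:
  assumes "\<omega> \<in> configs n din dout"
  shows "bij_betw (inv_into (Tails n dout) \<omega>) (Heads n din) (Tails n dout)"
  using assms by (auto simp: configs_def intro: bij_betw_inv_into)

lemma sigma_in:
  assumes "\<omega> \<in> configs n din dout" "v < n" "c < din v"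
  shows "inv_into (Tails n dout) \<omega> (v, c) \<in> Tails n dout"
  using sigma_bij[OF assms(1)] assms(2,3) by (auto simp: bij_betw_def Heads_def)

lemma Rop_Pmat:
  assumes om: "\<omega> \<in> configs n din dout" and j: "j < n"
  shows "Rop din dout (inv_into (Tails n dout) \<omega>) g j = (\<Sum>i<n. g i * Pmat dout \<omega> i j)"
proof -
  define \<sigma> where "\<sigma> = inv_into (Tails n dout) \<omega>"
  define Tj where "Tj = {e \<in> Tails n dout. fst (\<omega> e) = j}"
  define Hj where "Hj = {(j, c) | c. c < din j}"
  define hh where "hh = (\<lambda>e::nat\<times>nat. g (fst e) / real (dout (fst e)))"
  have bo: "bij_betw \<omega> (Tails n dout) (Heads n din)" using om by (simp add: configs_def)
  have bs: "bij_betw \<sigma> (Heads n din) (Tails n dout)" unfolding \<sigma>_def by (rule sigma_bij[OF om])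
  have HjH: "Hj \<subseteq> Heads n din" using j by (auto simp: Hj_def Heads_def)
  have "\<sigma> ` Hj = Tj"
  proof
    show "\<sigma> ` Hj \<subseteq> Tj"
    proof
      fix e assume "e \<in> \<sigma> ` Hj"
      then obtain x where x: "x \<in> Hj" "e = \<sigma> x" by auto
      have xH: "x \<in> Heads n din" using x HjH by auto
      have "\<omega> e = x" unfolding x \<sigma>_def using bo xH by (simp add: bij_betw_inv_into_right)
      moreover have "e \<in> Tails n dout" using bs xH x by (auto simp: bij_betw_def)
      ultimately show "e \<in> Tj" using x by (auto simp: Tj_def Hj_def)
    qed
    show "Tj \<subseteq> \<sigma> ` Hj"
    proof
      fix e assume e: "e \<in> Tj"
      then have eT: "e \<in> Tails n dout" and fe: "fst (\<omega> e) = j" by (auto simp: Tj_def)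
      have oe: "\<omega> e \<in> Heads n din" using bo eT by (auto simp: bij_betw_def)
      then have "\<omega> e \<in> Hj" using fe by (auto simp: Hj_def Heads_def)
      moreover have "\<sigma> (\<omega> e) = e" unfolding \<sigma>_def using bo eT by (simp add: bij_betw_inv_into_left)
      ultimately show "e \<in> \<sigma> ` Hj" by force
    qed
  qed
  then have bsj: "bij_betw \<sigma> Hj Tj" using bij_betw_subset[OF bs HjH] by simp
  have "Rop din dout \<sigma> g j = (\<Sum>c<din j. hh (\<sigma> (j, c)))"
    by (simp add: Rop_def hh_def)
  also have "\<dots> = (\<Sum>x\<in>Hj. hh (\<sigma> x))"
  proof -
    have "bij_betw (Pair j) {..<din j} Hj" by (auto simp: bij_betw_def Hj_def inj_on_def)
    from sum.reindex_bij_betw[OF this, of "\<lambda>x. hh (\<sigma> x)"] show ?thesis by simp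
  qed
  also have "\<dots> = (\<Sum>e\<in>Tj. hh e)"
    by (rule sum.reindex_bij_betw[OF bsj])
  also have "Tj = Sigma {..<n} (\<lambda>i. {k. k < dout i \<and> fst (\<omega> (i, k)) = j})"
    by (auto simp: Tj_def Tails_def)
  also have "(\<Sum>e\<in>\<dots>. hh e) = (\<Sum>i<n. \<Sum>k\<in>{k. k < dout i \<and> fst (\<omega> (i, k)) = j}. hh (i, k))"
    by (subst sum.Sigma) (auto simp: case_prod_unfold)
  also have "\<dots> = (\<Sum>i<n. g i * Pmat dout \<omega> i j)"
    by (intro sum.cong refl) (simp add: hh_def Pmat_def)
  finally show ?thesis by (simp add: \<sigma>_def)
qed

lemma pi_t_Rop:
  assumes om: "\<omega> \<in> configs n din dout"
  shows "j < n \<Longrightarrow> pi_t n din dout \<omega> t j =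
     ((Rop din dout (inv_into (Tails n dout) \<omega>)) ^^ t) (\<lambda>j. real (din j) / real (\<Sum>i<n. din i)) j"
proof (induction t arbitrary: j)
  case 0
  then show ?case by simp
next
  case (Suc t)
  have "pi_t n din dout \<omega> (Suc t) j = (\<Sum>i<n. pi_t n din dout \<omega> t i * Pmat dout \<omega> i j)" by simp
  also have "\<dots> = (\<Sum>i<n. ((Rop din dout (inv_into (Tails n dout) \<omega>)) ^^ t)
        (\<lambda>j. real (din j) / real (\<Sum>i<n. din i)) i * Pmat dout \<omega> i j)"
    using Suc.IH by (intro sum.cong refl) auto
  also have "\<dots> = Rop din dout (inv_into (Tails n dout) \<omega>) (((Rop din dout (inv_into (Tails n dout) \<omega>)) ^^ t)
        (\<lambda>j. real (din j) / real (\<Sum>i<n. din i))) j"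
    by (rule Rop_Pmat[OF om Suc.prems, symmetric])
  finally show ?case by simp
qed

lemma Wsum_scale: "Wsum (\<lambda>v. k * f v) L = k * Wsum f L"
  by (induction L) (auto simp: Wsum_def algebra_simps)

lemma npi_Wsum:
  assumes om: "\<omega> \<in> configs n din dout" and I: "I < n"
  shows "real n * pi_t n din dout \<omega> t I =
    Wsum (\<lambda>v. real n * real (din v) / real (\<Sum>i<n. din i)) (genG din dout I (inv_into (Tails n dout) \<omega>) t)"
proof -
  have "Wsum (\<lambda>v. real n * real (din v) / real (\<Sum>i<n. din i)) (genG din dout I (inv_into (Tails n dout) \<omega>) t)
     = real n * Wsum (\<lambda>v. real (din v) / real (\<Sum>i<n. din i)) (genG din dout I (inv_into (Tails n dout) \<omega>) t)"
    using Wsum_scale[of "real n" "\<lambda>v. real (din v) / real (\<Sum>i<n. din i)"] by (simp add: mult_ac)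
  also have "\<dots> = real n * pi_t n din dout \<omega> t I"
    by (simp add: Wsum_genG pi_t_Rop[OF om I])
  finally show ?thesis by simp
qed




definition strip :: "(nat list \<times> nat \<times> real) list \<Rightarrow> (nat \<times> real) list" where
  "strip L = map (\<lambda>(p,v,a). (v,a)) L"

lemma iid_list_Pi:
  fixes T :: "(nat \<times> nat) pmf"
  shows "iid_list k (map_pmf fst T) =
    map_pmf (\<lambda>f. map (\<lambda>c. fst (f (c # p))) [j..<j+k]) (Pi_pmf ((\<lambda>c. c # p) ` {j..<j+k}) dd (\<lambda>_. T))"
proof (induction k arbitrary: j)
  case 0
  then show ?case by (simp add: map_pmf_def bind_return_pmf)
next
  case (Suc k)
  have set: "(\<lambda>c. c # p) ` {j..<j + Suc k} = insert (j # p) ((\<lambda>c. c # p) ` {Suc j..<Suc j + k})"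
  proof -
    have "{j..<j + Suc k} = insert j {Suc j..<Suc j + k}" by auto
    then show ?thesis by simp
  qed
  have nin: "j # p \<notin> (\<lambda>c. c # p) ` {Suc j..<Suc j + k}" by auto
  have up: "[j..<j + Suc k] = j # [Suc j..<Suc j + k]" by (simp add: upt_rec)
  have "map_pmf (\<lambda>f. map (\<lambda>c. fst (f (c # p))) [j..<j+Suc k]) (Pi_pmf ((\<lambda>c. c # p) ` {j..<j+Suc k}) dd (\<lambda>_. T))
    = map_pmf (\<lambda>f. map (\<lambda>c. fst (f (c # p))) [j..<j+Suc k])
        (map_pmf (\<lambda>(y,f). f(j # p := y)) (pair_pmf T (Pi_pmf ((\<lambda>c. c # p) ` {Suc j..<Suc j + k}) dd (\<lambda>_. T))))"
    unfolding set by (subst Pi_pmf_insert) (use nin in auto)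
  also have "\<dots> = map_pmf (\<lambda>(y,f). fst y # map (\<lambda>c. fst (f (c # p))) [Suc j..<Suc j + k])
        (pair_pmf T (Pi_pmf ((\<lambda>c. c # p) ` {Suc j..<Suc j + k}) dd (\<lambda>_. T)))"
    unfolding pmf.map_comp o_def up by (intro map_pmf_cong refl) auto
  also have "\<dots> = bind_pmf T (\<lambda>y. map_pmf (Cons (fst y)) (map_pmf (\<lambda>f. map (\<lambda>c. fst (f (c # p))) [Suc j..<Suc j + k])
        (Pi_pmf ((\<lambda>c. c # p) ` {Suc j..<Suc j + k}) dd (\<lambda>_. T))))"
    by (simp add: pair_pmf_def map_pmf_def bind_assoc_pmf bind_return_pmf)
  also have "\<dots> = bind_pmf T (\<lambda>y. map_pmf (Cons (fst y)) (iid_list k (map_pmf fst T)))"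
    unfolding Suc.IH[of "Suc j"] ..
  also have "\<dots> = iid_list (Suc k) (map_pmf fst T)"
    by (simp add: bind_map_pmf)
  finally show ?case ..
qed

definition CP :: "(nat \<Rightarrow> nat) \<Rightarrow> (nat list \<times> nat \<times> real) list \<Rightarrow> nat list set" where
  "CP din L = (\<Union>(p,v,a)\<in>set L. (\<lambda>c. c # p) ` {0..<din v})"

lemma finite_CP: "finite (CP din L)"
  by (auto simp: CP_def)

lemma childsT_cong:
  assumes "\<And>x. x \<in> CP din L \<Longrightarrow> \<tau>1 x = \<tau>2 x"
  shows "childsT din dout \<tau>1 L = childsT din dout \<tau>2 L"
  unfolding childsT_def
proof (intro arg_cong[where f = concat] map_cong refl)
  fix x assume x: "x \<in> set L"
  obtain p v a where xe: "x = (p, v, a)" by (cases x) auto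
  show "(\<lambda>(p,v,a). map (\<lambda>c. (c # p, fst (\<tau>1 (c # p)), a / real (dout (fst (\<tau>1 (c # p)))))) [0..<din v]) x =
        (\<lambda>(p,v,a). map (\<lambda>c. (c # p, fst (\<tau>2 (c # p)), a / real (dout (fst (\<tau>2 (c # p)))))) [0..<din v]) x"
  proof -
    have "\<tau>1 (c # p) = \<tau>2 (c # p)" if c: "c < din v" for c
    proof -
      have "c # p \<in> (\<lambda>c. c # p) ` {0..<din v}" using c by auto
      then have "c # p \<in> CP din L" unfolding CP_def using x xe by blast
      then show ?thesis by (rule assms)
    qed
    then show ?thesis unfolding xe by (auto intro!: map_cong)
  qed
qed

lemma childsT_Cons:
  "childsT din dout \<tau> ((p,v,a) # L) =
     map (\<lambda>c. (c # p, fst (\<tau> (c # p)), a / real (dout (fst (\<tau> (c # p)))))) [0..<din v] @ childsT din dout \<tau> L"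
  by (simp add: childsT_def)

lemma CP_Cons: "CP din ((p,v,a) # L) = (\<lambda>c. c # p) ` {0..<din v} \<union> CP din L"
  by (simp add: CP_def)

lemma next_gen_Pi:
  assumes "distinct (map fst L)"
  shows "next_gen n din dout (strip L) =
    map_pmf (\<lambda>\<tau>. strip (childsT din dout \<tau> L)) (Pi_pmf (CP din L) dd (\<lambda>_. pmf_of_set (Tails n dout)))"
  using assms
proof (induction L)
  case Nil
  then show ?case by (simp add: strip_def CP_def childsT_def)
next
  case (Cons x L)
  obtain p v a where xe: "x = (p, v, a)" by (cases x) auto
  define T where "T = pmf_of_set (Tails n dout)"
  define C0 where "C0 = (\<lambda>c. c # p) ` {0..<din v}"
  have disj: "C0 \<inter> CP din L = {}"
  proof (rule ccontr)
    assume "C0 \<inter> CP din L \<noteq> {}"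
    then obtain y where y1: "y \<in> C0" and y2: "y \<in> CP din L" by blast
    from y1 obtain c where y: "y = c # p" by (auto simp: C0_def)
    from y2 obtain p' v' a' c' where m: "(p', v', a') \<in> set L" and y': "y = c' # p'"
      by (auto simp: CP_def)
    have "p = p'" using y y' by simp
    then have "p \<in> fst ` set L" using m by force
    then show False using Cons.prems xe by simp
  qed
  have ih: "next_gen n din dout (strip L) = map_pmf (\<lambda>\<tau>. strip (childsT din dout \<tau> L)) (Pi_pmf (CP din L) dd (\<lambda>_. T))"
    using Cons by (simp add: T_def)
  have iid: "iid_list (din v) (mark_pmf n dout) = map_pmf (\<lambda>f. map (\<lambda>c. fst (f (c # p))) [0..<din v]) (Pi_pmf C0 dd (\<lambda>_. T))"
    using iid_list_Pi[of "din v" T p 0 dd] by (simp add: mark_pmf_def T_def C0_def)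
  have "next_gen n din dout (strip (x # L)) =
     bind_pmf (iid_list (din v) (mark_pmf n dout)) (\<lambda>cs.
       map_pmf (\<lambda>rest. map (\<lambda>j. (j, a / real (dout j))) cs @ rest) (next_gen n din dout (strip L)))"
    by (simp add: xe strip_def)
  also have "\<dots> = map_pmf (\<lambda>(f,g). map (\<lambda>j. (j, a / real (dout j))) (map (\<lambda>c. fst (f (c # p))) [0..<din v])
        @ strip (childsT din dout g L)) (pair_pmf (Pi_pmf C0 dd (\<lambda>_. T)) (Pi_pmf (CP din L) dd (\<lambda>_. T)))"
    unfolding iid ih by (simp add: pair_pmf_def map_pmf_def bind_assoc_pmf bind_return_pmf)
  also have "\<dots> = map_pmf (\<lambda>(f,g). strip (childsT din dout (\<lambda>x. if x \<in> C0 then f x else g x) (x # L)))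
        (pair_pmf (Pi_pmf C0 dd (\<lambda>_. T)) (Pi_pmf (CP din L) dd (\<lambda>_. T)))"
  proof (intro map_pmf_cong refl, clarify)
    fix f g
    have "childsT din dout (\<lambda>x. if x \<in> C0 then f x else g x) L = childsT din dout g L"
      using disj by (intro childsT_cong) auto
    moreover have "\<And>c. c < din v \<Longrightarrow> c # p \<in> C0" by (auto simp: C0_def)
    ultimately show "map (\<lambda>j. (j, a / real (dout j))) (map (\<lambda>c. fst (f (c # p))) [0..<din v]) @ strip (childsT din dout g L) =
       strip (childsT din dout (\<lambda>x. if x \<in> C0 then f x else g x) (x # L))"
      unfolding xe childsT_Cons by (auto simp: strip_def)
  qed
  also have "\<dots> = map_pmf (\<lambda>\<tau>. strip (childsT din dout \<tau> (x # L)))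
       (map_pmf (\<lambda>(f,g) x. if x \<in> C0 then f x else g x) (pair_pmf (Pi_pmf C0 dd (\<lambda>_. T)) (Pi_pmf (CP din L) dd (\<lambda>_. T))))"
    by (simp add: pmf.map_comp o_def case_prod_unfold)
  also have "\<dots> = map_pmf (\<lambda>\<tau>. strip (childsT din dout \<tau> (x # L))) (Pi_pmf (C0 \<union> CP din L) dd (\<lambda>_. T))"
    by (subst Pi_pmf_union) (use disj in \<open>auto simp: C0_def finite_CP\<close>)
  also have "C0 \<union> CP din L = CP din (x # L)" by (simp add: xe CP_Cons C0_def)
  finally show ?case by (simp add: T_def)
qed

lemma next_gen_Pi':
  assumes "distinct (map fst L)" "finite S" "CP din L \<subseteq> S"
  shows "next_gen n din dout (strip L) =
    map_pmf (\<lambda>\<tau>. strip (childsT din dout \<tau> L)) (Pi_pmf S dd (\<lambda>_. pmf_of_set (Tails n dout)))"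
proof -
  have "next_gen n din dout (strip L) = map_pmf (\<lambda>\<tau>. strip (childsT din dout \<tau> L))
     (map_pmf (\<lambda>f x. if x \<in> CP din L then f x else dd) (Pi_pmf S dd (\<lambda>_. pmf_of_set (Tails n dout))))"
    by (subst Pi_pmf_subset[symmetric]) (use assms in \<open>auto intro: next_gen_Pi\<close>)
  also have "\<dots> = map_pmf (\<lambda>\<tau>. strip (childsT din dout \<tau> L)) (Pi_pmf S dd (\<lambda>_. pmf_of_set (Tails n dout)))"
    unfolding pmf.map_comp o_def by (intro map_pmf_cong refl arg_cong[where f = strip] childsT_cong) auto
  finally show ?thesis .
qed




definition Lev :: "nat \<Rightarrow> nat \<Rightarrow> nat list set" where
  "Lev D k = {p. length p = k \<and> set p \<subseteq> {..<D}}"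

lemma finite_Lev: "finite (Lev D k)"
proof -
  have "Lev D k \<subseteq> {xs. set xs \<subseteq> {..<D} \<and> length xs \<le> k}" by (auto simp: Lev_def)
  then show ?thesis using finite_lists_length_le[of "{..<D}" k] by (rule finite_subset) simp
qed

lemma finite_PosS: "finite (PosS D h)"
proof -
  have "PosS D h \<subseteq> {xs. set xs \<subseteq> {..<D} \<and> length xs \<le> h}" by (auto simp: PosS_def)
  then show ?thesis using finite_lists_length_le[of "{..<D}" h] by (rule finite_subset) simp
qed

lemma PosS_Suc: "PosS D (Suc t) = PosS D t \<union> Lev D (Suc t)"
  by (auto simp: PosS_def Lev_def)

lemma PosS_Lev_disj: "PosS D t \<inter> Lev D (Suc t) = {}"
  by (auto simp: PosS_def Lev_def)

lemma PosS_0: "PosS D 0 = {}"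
  by (auto simp: PosS_def)

lemma childsT_mem:
  "(q, u, b) \<in> set (childsT din dout \<tau> L) \<Longrightarrow>
     \<exists>p v a c. (p, v, a) \<in> set L \<and> c < din v \<and> q = c # p \<and> u = fst (\<tau> (c # p)) \<and> b = a / real (dout u)"
  unfolding childsT_def by (clarsimp split: prod.splits) blast

lemma genT_len: "(p, v, a) \<in> set (genT din dout I \<tau> t) \<Longrightarrow> length p = t"
proof (induction t arbitrary: p v a)
  case 0 then show ?case by simp
next
  case (Suc t) then show ?case by (force dest: childsT_mem)
qed

lemma childsT_fst: "fst ` set (childsT din dout \<tau> L) \<subseteq> {c # p | c p. p \<in> fst ` set L}"
  by (force simp: childsT_def)

lemma distinct_childsT: "distinct (map fst L) \<Longrightarrow> distinct (map fst (childsT din dout \<tau> L))"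
proof (induction L)
  case Nil then show ?case by (simp add: childsT_def)
next
  case (Cons x L)
  obtain p v a where xe: "x = (p, v, a)" by (cases x) auto
  have d1: "distinct (map fst (map (\<lambda>c. (c # p, fst (\<tau> (c # p)), a / real (dout (fst (\<tau> (c # p)))))) [0..<din v]))"
    by (simp add: o_def distinct_map inj_on_def)
  have d2: "distinct (map fst (childsT din dout \<tau> L))" using Cons by simp
  have pn: "p \<notin> fst ` set L" using Cons.prems xe by simp
  have "set (map fst (map (\<lambda>c. (c # p, fst (\<tau> (c # p)), a / real (dout (fst (\<tau> (c # p)))))) [0..<din v]))
     \<inter> set (map fst (childsT din dout \<tau> L)) = {}"
    using childsT_fst[of din dout \<tau> L] pn by auto
  then show ?case using d1 d2 by (simp add: xe childsT_Cons del: map_map)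
qed

lemma genT_distinct: "distinct (map fst (genT din dout I \<tau> t))"
  by (induction t) (auto intro: distinct_childsT)

lemma genT_cong:
  "(\<And>x. 1 \<le> length x \<Longrightarrow> length x \<le> s \<Longrightarrow> \<tau>1 x = \<tau>2 x) \<Longrightarrow> genT din dout I \<tau>1 s = genT din dout I \<tau>2 s"
proof (induction s)
  case 0 then show ?case by simp
next
  case (Suc s)
  have ih: "genT din dout I \<tau>1 s = genT din dout I \<tau>2 s" using Suc by simp
  have "childsT din dout \<tau>1 (genT din dout I \<tau>2 s) = childsT din dout \<tau>2 (genT din dout I \<tau>2 s)"
  proof (rule childsT_cong)
    fix x assume "x \<in> CP din (genT din dout I \<tau>2 s)"
    then obtain p v a c where "(p, v, a) \<in> set (genT din dout I \<tau>2 s)" "x = c # p"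
      by (auto simp: CP_def)
    then have "length x = Suc s" using genT_len by fastforce
    then show "\<tau>1 x = \<tau>2 x" using Suc.prems by simp
  qed
  then show ?case using ih by simp
qed

lemma genT_inv:
  assumes I: "I < n" and D: "\<And>v. v < n \<Longrightarrow> din v \<le> D"
    and tau: "\<And>x. x \<in> PosS D t \<Longrightarrow> \<tau> x \<in> Tails n dout"
  shows "(p, v, a) \<in> set (genT din dout I \<tau> t) \<Longrightarrow> v < n \<and> set p \<subseteq> {..<D}"
  using tau
proof (induction t arbitrary: p v a)
  case 0 then show ?case using I by simp
next
  case (Suc t)
  from childsT_mem[of p v a din dout \<tau> "genT din dout I \<tau> t"] Suc.prems(1)
  obtain p' v' a' c where m: "(p', v', a') \<in> set (genT din dout I \<tau> t)" "c < din v'" "p = c # p'" "v = fst (\<tau> (c # p'))"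
    by auto
  have ih: "v' < n \<and> set p' \<subseteq> {..<D}"
    using Suc.IH[OF m(1)] Suc.prems(2) by (auto simp: PosS_def)
  have "c < D" using m(2) D ih by (meson order_less_le_trans)
  moreover have "length p' = t" using genT_len[OF m(1)] .
  ultimately have "c # p' \<in> PosS D (Suc t)" using ih by (auto simp: PosS_def)
  then have "\<tau> (c # p') \<in> Tails n dout" using Suc.prems(2) by blast
  then show ?case using m ih \<open>c < D\<close> by (auto simp: Tails_def)
qed

lemma CP_genT_Lev:
  assumes I: "I < n" and D: "\<And>v. v < n \<Longrightarrow> din v \<le> D"
    and tau: "\<And>x. x \<in> PosS D t \<Longrightarrow> \<tau> x \<in> Tails n dout"
  shows "CP din (genT din dout I \<tau> t) \<subseteq> Lev D (Suc t)"
proof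
  fix x assume "x \<in> CP din (genT din dout I \<tau> t)"
  then obtain p v a c where m: "(p, v, a) \<in> set (genT din dout I \<tau> t)" "c < din v" "x = c # p"
    by (auto simp: CP_def)
  have "v < n \<and> set p \<subseteq> {..<D}" using genT_inv[OF I D tau m(1)] by blast
  moreover have "length p = t" using genT_len[OF m(1)] .
  ultimately show "x \<in> Lev D (Suc t)" using m D by (force simp: Lev_def)
qed

lemma gens_Pi:
  assumes n: "n > 0" and TN: "Tails n dout \<noteq> {}" and D: "\<And>v. v < n \<Longrightarrow> din v \<le> D"
  shows "gens n din dout t = map_pmf (\<lambda>(I,\<tau>). map (\<lambda>s. strip (genT din dout I \<tau> s)) [0..<Suc t])
     (pair_pmf (pmf_of_set {..<n}) (Pi_pmf (PosS D t) dd (\<lambda>_. pmf_of_set (Tails n dout))))"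
proof (induction t)
  case 0
  show ?case
    by (simp add: PosS_0 map_pmf_def pair_pmf_def bind_return_pmf bind_assoc_pmf strip_def)
next
  case (Suc t)
  define T where "T = pmf_of_set (Tails n dout)"
  define U where "U = pmf_of_set {..<n::nat}"
  define P where "P = Pi_pmf (PosS D t) dd (\<lambda>_. T)"
  define Q where "Q = Pi_pmf (Lev D (Suc t)) dd (\<lambda>_. T)"
  define F where "F = (\<lambda>t (I,\<tau>). map (\<lambda>s. strip (genT din dout I \<tau> s)) [0..<Suc t])"
  have setT: "set_pmf T = Tails n dout" using TN by (simp add: T_def finite_Tails)
  have setU: "set_pmf U = {..<n}" using n unfolding U_def by (subst set_pmf_of_set) auto
  have setP: "set_pmf P = PiE_dflt (PosS D t) dd (\<lambda>_. Tails n dout)"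
    unfolding P_def by (subst set_Pi_pmf) (auto simp: finite_PosS setT o_def)
  have setQ: "set_pmf Q = PiE_dflt (Lev D (Suc t)) dd (\<lambda>_. Tails n dout)"
    unfolding Q_def by (subst set_Pi_pmf) (auto simp: finite_Lev setT o_def)
  have "gens n din dout (Suc t) = bind_pmf (map_pmf (F t) (pair_pmf U P))
      (\<lambda>gs. map_pmf (\<lambda>g. gs @ [g]) (next_gen n din dout (last gs)))"
    using Suc.IH by (simp add: F_def U_def P_def T_def case_prod_unfold)
  also have "\<dots> = bind_pmf U (\<lambda>I. bind_pmf P (\<lambda>f. bind_pmf Q (\<lambda>g.
       return_pmf (F t (I, f) @ [strip (childsT din dout g (genT din dout I f t))]))))"
    unfolding bind_map_pmf pair_pmf_def bind_assoc_pmf bind_return_pmf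
  proof (intro bind_pmf_cong refl)
    fix I f assume I: "I \<in> set_pmf U" and f: "f \<in> set_pmf P"
    have I': "I < n" using I setU by auto
    have tau: "\<And>x. x \<in> PosS D t \<Longrightarrow> f x \<in> Tails n dout" using f setP by (auto simp: PiE_dflt_def)
    have last: "last (F t (I, f)) = strip (genT din dout I f t)" by (simp add: F_def)
    have "next_gen n din dout (strip (genT din dout I f t)) =
        map_pmf (\<lambda>\<tau>. strip (childsT din dout \<tau> (genT din dout I f t))) Q"
      unfolding Q_def T_def
      by (rule next_gen_Pi'[OF genT_distinct finite_Lev CP_genT_Lev[OF I' D tau]])
    then show "map_pmf (\<lambda>g. F t (I, f) @ [g]) (next_gen n din dout (last (F t (I, f)))) =
        bind_pmf Q (\<lambda>g. return_pmf (F t (I, f) @ [strip (childsT din dout g (genT din dout I f t))]))"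
      unfolding last by (simp add: map_pmf_def bind_assoc_pmf bind_return_pmf)
  qed
  also have "\<dots> = bind_pmf U (\<lambda>I. bind_pmf P (\<lambda>f. bind_pmf Q (\<lambda>g.
       return_pmf (F (Suc t) (I, (\<lambda>x. if x \<in> PosS D t then f x else g x))))))"
  proof (intro bind_pmf_cong refl)
    fix I f g assume I: "I \<in> set_pmf U" and f: "f \<in> set_pmf P" and g: "g \<in> set_pmf Q"
    define h where "h = (\<lambda>x. if x \<in> PosS D t then f x else g x)"
    have fo: "f x = dd" if "x \<notin> PosS D t" for x using f that setP by (auto simp: PiE_dflt_def)
    have go: "g x = dd" if "x \<notin> Lev D (Suc t)" for x using g that setQ by (auto simp: PiE_dflt_def)
    have hf: "genT din dout I h s = genT din dout I f s" if "s \<le> t" for s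
    proof (rule genT_cong)
      fix x :: "nat list" assume x: "1 \<le> length x" "length x \<le> s"
      then have "x \<notin> Lev D (Suc t)" using that by (auto simp: Lev_def)
      then show "h x = f x" using fo go by (auto simp: h_def)
    qed
    have hg: "childsT din dout h (genT din dout I f t) = childsT din dout g (genT din dout I f t)"
    proof (rule childsT_cong)
      fix x assume "x \<in> CP din (genT din dout I f t)"
      then obtain p v a c where "(p, v, a) \<in> set (genT din dout I f t)" "x = c # p"
        by (auto simp: CP_def)
      then have "length x = Suc t" using genT_len by fastforce
      then show "h x = g x" by (auto simp: h_def PosS_def)
    qed
    have "F (Suc t) (I, h) = F t (I, h) @ [strip (genT din dout I h (Suc t))]"
      by (simp add: F_def)
    also have "F t (I, h) = F t (I, f)"
      unfolding F_def using hf by (auto intro!: map_cong)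
    also have "genT din dout I h (Suc t) = childsT din dout g (genT din dout I f t)"
      using hf[of t] hg by simp
    finally show "return_pmf (F t (I, f) @ [strip (childsT din dout g (genT din dout I f t))]) =
        return_pmf (F (Suc t) (I, h))" by simp
  qed
  also have "\<dots> = map_pmf (F (Suc t)) (pair_pmf U (map_pmf (\<lambda>(f,g) x. if x \<in> PosS D t then f x else g x) (pair_pmf P Q)))"
    by (simp add: map_pmf_def pair_pmf_def bind_assoc_pmf bind_return_pmf)
  also have "map_pmf (\<lambda>(f,g) x. if x \<in> PosS D t then f x else g x) (pair_pmf P Q) = Pi_pmf (PosS D (Suc t)) dd (\<lambda>_. T)"
    unfolding P_def Q_def PosS_Suc by (rule Pi_pmf_union[symmetric]) (auto simp: finite_PosS finite_Lev PosS_Lev_disj)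
  finally show ?case by (simp add: F_def U_def T_def)
qed




definition headT :: "nat \<Rightarrow> (nat list \<Rightarrow> nat \<times> nat) \<Rightarrow> nat list \<Rightarrow> nat \<times> nat" where
  "headT I \<tau> q = (vT I \<tau> (tl q), hd q)"

lemma PosS_tl: "c # p \<in> PosS D h \<Longrightarrow> p = [] \<or> p \<in> PosS D h"
  by (cases p) (auto simp: PosS_def)

lemma act_agree:
  assumes om: "\<omega> \<in> configs n din dout"
    and tauT: "\<And>q. q \<in> PosS D h \<Longrightarrow> \<tau> q \<in> Tails n dout"
    and ext: "\<And>q. q \<in> PosS D h \<Longrightarrow> actT din I \<tau> q \<Longrightarrow> \<omega> (\<tau> q) = headT I \<tau> q"
  shows "q = [] \<or> q \<in> PosS D h \<Longrightarrow>
     actG din I (inv_into (Tails n dout) \<omega>) q = actT din I \<tau> q \<and>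
     (actT din I \<tau> q \<longrightarrow> vG I (inv_into (Tails n dout) \<omega>) q = vT I \<tau> q)"
proof (induction q)
  case Nil then show ?case by simp
next
  case (Cons c p)
  define \<sigma> where "\<sigma> = inv_into (Tails n dout) \<omega>"
  have qP: "c # p \<in> PosS D h" using Cons.prems by simp
  have ih: "actG din I \<sigma> p = actT din I \<tau> p \<and> (actT din I \<tau> p \<longrightarrow> vG I \<sigma> p = vT I \<tau> p)"
    using Cons.IH PosS_tl[OF qP] by (simp add: \<sigma>_def)
  have inj: "inj_on \<omega> (Tails n dout)" using om by (simp add: configs_def bij_betw_def)
  have a: "actG din I \<sigma> (c # p) = actT din I \<tau> (c # p)" using ih by auto
  have "vG I \<sigma> (c # p) = vT I \<tau> (c # p)" if act: "actT din I \<tau> (c # p)"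
  proof -
    have e: "\<omega> (\<tau> (c # p)) = (vT I \<tau> p, c)" using ext[OF qP act] by (simp add: headT_def)
    have "\<sigma> (vT I \<tau> p, c) = \<tau> (c # p)"
      unfolding \<sigma>_def e[symmetric] using inj tauT[OF qP] by (simp add: inv_into_f_f)
    then show ?thesis using ih act by simp
  qed
  then show ?case using a by (simp add: \<sigma>_def)
qed

lemma phi_preimage:
  assumes om: "\<omega> \<in> configs n din dout"
    and tauT: "\<And>q. q \<in> PosS D h \<Longrightarrow> \<tau> q \<in> Tails n dout"
    and tauD: "\<And>q. q \<notin> PosS D h \<Longrightarrow> \<tau> q = dd"
    and ext: "\<And>q. q \<in> PosS D h \<Longrightarrow> actT din I \<tau> q \<Longrightarrow> \<omega> (\<tau> q) = headT I \<tau> q"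
    and tcD: "\<And>q. q \<notin> PosS D h \<Longrightarrow> \<tau>c q = dd"
    and tcA: "\<And>q. q \<in> PosS D h \<Longrightarrow> \<not> actT din I \<tau> q \<Longrightarrow> \<tau>c q = \<tau> q"
  shows "phi (PosS D h) din I (inv_into (Tails n dout) \<omega>) \<tau>c = \<tau>"
proof
  fix q
  define \<sigma> where "\<sigma> = inv_into (Tails n dout) \<omega>"
  have inj: "inj_on \<omega> (Tails n dout)" using om by (simp add: configs_def bij_betw_def)
  show "phi (PosS D h) din I (inv_into (Tails n dout) \<omega>) \<tau>c q = \<tau> q"
  proof (cases "q \<in> PosS D h")
    case False then show ?thesis using tauD tcD by (simp add: phi_def)
  next
    case qP: True
    have ag: "actG din I \<sigma> q = actT din I \<tau> q" using act_agree[OF om tauT ext] qP by (simp add: \<sigma>_def)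
    show ?thesis
    proof (cases "actT din I \<tau> q")
      case False then show ?thesis using qP ag tcA by (simp add: phi_def \<sigma>_def)
    next
      case act: True
      obtain c p where q: "q = c # p" using qP by (cases q) (auto simp: PosS_def)
      have actp: "actT din I \<tau> p" using act q by simp
      have vp: "vG I \<sigma> p = vT I \<tau> p"
        using act_agree[OF om tauT ext, where q = p] PosS_tl[of c p D h] qP q actp by (simp add: \<sigma>_def)
      have e: "\<omega> (\<tau> q) = (vT I \<tau> p, c)" using ext[OF qP act] q by (simp add: headT_def)
      have "\<sigma> (vT I \<tau> p, c) = \<tau> q"
        unfolding \<sigma>_def e[symmetric] using inj tauT[OF qP] by (simp add: inv_into_f_f)
      then show ?thesis using qP ag act q vp by (simp add: phi_def \<sigma>_def)
    qed
  qed
qed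

lemma fact_le_pow: "k \<le> m \<Longrightarrow> fact m \<le> fact (m - k) * m ^ k"
proof (induction k)
  case 0 then show ?case by simp
next
  case (Suc k)
  have "fact m \<le> fact (m - k) * m ^ k" using Suc by simp
  also have "fact (m - k) = (m - k) * fact (m - Suc k)"
    using Suc.prems by (metis Suc_diff_Suc fact_Suc Suc_le_lessD diff_Suc_1 of_nat_id)
  also have "\<dots> * m ^ k \<le> m * fact (m - Suc k) * m ^ k" by simp
  also have "\<dots> = fact (m - Suc k) * m ^ Suc k" by simp
  finally show ?case .
qed




lemma headT_inj:
  assumes I: "I < n"
    and tauT: "\<forall>q\<in>PosS D h. \<tau> q \<in> Tails n dout"
    and dist: "\<forall>q1\<in>PosS D h. \<forall>q2\<in>PosS D h. q1 \<noteq> q2 \<longrightarrow> fst (\<tau> q1) \<noteq> fst (\<tau> q2)"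
    and root: "\<forall>q\<in>PosS D h. fst (\<tau> q) \<noteq> I"
  shows "inj_on (headT I \<tau>) (PosS D h)"
proof
  fix q1 q2 assume q1: "q1 \<in> PosS D h" and q2: "q2 \<in> PosS D h" and e: "headT I \<tau> q1 = headT I \<tau> q2"
  obtain c1 p1 where q1e: "q1 = c1 # p1" using q1 by (cases q1) (auto simp: PosS_def)
  obtain c2 p2 where q2e: "q2 = c2 # p2" using q2 by (cases q2) (auto simp: PosS_def)
  have c: "c1 = c2" and v: "vT I \<tau> p1 = vT I \<tau> p2" using e by (auto simp: headT_def q1e q2e)
  have p1P: "p1 = [] \<or> p1 \<in> PosS D h" using PosS_tl q1 q1e by blast
  have p2P: "p2 = [] \<or> p2 \<in> PosS D h" using PosS_tl q2 q2e by blast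
  have "p1 = p2"
  proof (cases "p1 = []")
    case True
    then show ?thesis
    proof (cases "p2 = []")
      case False
      then obtain d p where "p2 = d # p" by (cases p2) auto
      then show ?thesis using v True root p2P by auto
    qed simp
  next
    case False
    then obtain d1 r1 where p1e: "p1 = d1 # r1" by (cases p1) auto
    show ?thesis
    proof (cases "p2 = []")
      case True then show ?thesis using v p1e root p1P by auto
    next
      case False
      then obtain d2 r2 where p2e: "p2 = d2 # r2" by (cases p2) auto
      show ?thesis using v dist p1P p2P p1e p2e by fastforce
    qed
  qed
  then show "q1 = q2" using c q1e q2e by simp
qed

lemma pmf_mu_ge:
  assumes cards: "card (Tails n dout) = card (Heads n din)" and TN: "Tails n dout \<noteq> {}" and I: "I < n"
    and tauT: "\<forall>q\<in>PosS D h. \<tau> q \<in> Tails n dout" and tauD: "\<forall>q. q \<notin> PosS D h \<longrightarrow> \<tau> q = dd"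
    and dist: "\<forall>q1\<in>PosS D h. \<forall>q2\<in>PosS D h. q1 \<noteq> q2 \<longrightarrow> fst (\<tau> q1) \<noteq> fst (\<tau> q2)"
    and root: "\<forall>q\<in>PosS D h. fst (\<tau> q) \<noteq> I"
  shows "pmf (pair_pmf (pmf_of_set {..<n}) (Pi_pmf (PosS D h) dd (\<lambda>_. pmf_of_set (Tails n dout)))) (I, \<tau>) \<le>
    pmf (map_pmf (\<lambda>(I,(\<omega>,\<tau>c)). (I, phi (PosS D h) din I (inv_into (Tails n dout) \<omega>) \<tau>c))
      (pair_pmf (pmf_of_set {..<n}) (pair_pmf (config_pmf n din dout)
        (Pi_pmf (PosS D h) dd (\<lambda>_. pmf_of_set (Tails n dout)))))) (I, \<tau>)"
proof -
  define Tl where "Tl = Tails n dout"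
  define Hd where "Hd = Heads n din"
  define P where "P = PosS D h"
  define T where "T = pmf_of_set Tl"
  define m where "m = card Tl"
  define C where "C = configs n din dout"
  define Act where "Act = {q \<in> P. actT din I \<tau> q}"
  define k where "k = card Act"
  define Ext where "Ext = {\<omega> \<in> C. \<forall>q\<in>Act. \<omega> (\<tau> q) = headT I \<tau> q}"
  define R where "R = PiE_dflt P dd (\<lambda>q. if q \<in> Act then Tl else {\<tau> q})"
  define S where "S = {I} \<times> (Ext \<times> R)"
  define U where "U = pair_pmf (pmf_of_set {..<n}) (pair_pmf (config_pmf n din dout) (Pi_pmf P dd (\<lambda>_. T)))"
  define \<Phi> where "\<Phi> = (\<lambda>(I,(\<omega>,\<tau>c)). (I, phi P din I (inv_into Tl \<omega>) \<tau>c))"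
  have finTl: "finite Tl" and finHd: "finite Hd" by (auto simp: Tl_def Hd_def finite_Tails finite_Heads)
  have finP: "finite P" by (simp add: P_def finite_PosS)
  have mpos: "m > 0" using TN finTl by (simp add: m_def Tl_def card_gt_0_iff)
  have cardC: "card C = fact m"
    unfolding C_def configs_bijs m_def Tl_def using cards by (intro card_bijs) (auto simp: finite_Tails finite_Heads)
  have finC: "finite C" unfolding C_def configs_bijs by (intro finite_bijs finite_Tails finite_Heads)
  have CN: "C \<noteq> {}" using cardC by (metis card.empty fact_nonzero)
  have finAct: "finite Act" using finP by (simp add: Act_def)
  have ActP: "Act \<subseteq> P" by (auto simp: Act_def)
  have injt: "inj_on \<tau> Act"
  proof (rule inj_onI, rule ccontr)
    fix x y assume x: "x \<in> Act" and y: "y \<in> Act" and e: "\<tau> x = \<tau> y" and ne: "x \<noteq> y"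
    have "x \<in> PosS D h" "y \<in> PosS D h" using x y ActP by (auto simp: P_def)
    then have "fst (\<tau> x) \<noteq> fst (\<tau> y)" using dist ne by blast
    then show False using e by simp
  qed
  have injh: "inj_on (headT I \<tau>) Act"
    using headT_inj[OF I tauT dist root] ActP inj_on_subset P_def by blast
  have tAct: "\<tau> ` Act \<subseteq> Tl" using tauT ActP by (auto simp: P_def Tl_def)
  have hAct: "headT I \<tau> ` Act \<subseteq> Hd"
  proof
    fix y assume "y \<in> headT I \<tau> ` Act"
    then obtain q where q: "q \<in> Act" "y = headT I \<tau> q" by blast
    have qP: "q \<in> P" and act: "actT din I \<tau> q" using q by (auto simp: Act_def)
    obtain c p where qe: "q = c # p" using qP by (cases q) (auto simp: P_def PosS_def)
    have "vT I \<tau> p < n"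
    proof (cases p)
      case Nil then show ?thesis using I by simp
    next
      case (Cons d r)
      then have "p \<in> P" using PosS_tl[of c p D h] qP qe by (auto simp: P_def)
      then have "\<tau> p \<in> Tl" using tauT by (auto simp: P_def Tl_def)
      then show ?thesis using Cons by (auto simp: Tl_def Tails_def)
    qed
    then show "y \<in> Hd" using act q qe by (auto simp: headT_def Hd_def Heads_def)
  qed
  have kle: "k \<le> m"
  proof -
    have "k = card (\<tau> ` Act)" using injt by (simp add: k_def card_image)
    also have "\<dots> \<le> m" using tAct finTl by (simp add: m_def card_mono)
    finally show ?thesis .
  qed
  have cardExt: "card Ext = fact (m - k)"
  proof -
    have "Ext = {f \<in> bijs Tl Hd. \<forall>j\<in>Act. f (\<tau> j) = headT I \<tau> j}"
      by (simp add: Ext_def C_def configs_bijs Tl_def Hd_def)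
    also have "card \<dots> = fact (card Tl - card Act)"
      using cards by (intro card_bijs_constr finTl finHd finAct injt injh tAct hAct) (simp add: Tl_def Hd_def)
    finally show ?thesis by (simp add: m_def k_def)
  qed
  have finR: "finite R" unfolding R_def using finP finTl
    by (intro finite_PiE_dflt) auto
  have cardR: "card R = m ^ k"
  proof -
    have "card R = (\<Prod>q\<in>P. card (if q \<in> Act then Tl else {\<tau> q}))"
      unfolding R_def using finP finTl by (intro card_PiE_dflt) auto
    also have "\<dots> = (\<Prod>q\<in>P. if q \<in> Act then m else 1)"
      by (intro prod.cong refl) (auto simp: m_def)
    also have "\<dots> = (\<Prod>q\<in>P \<inter> Act. m)"
      using finP by (subst prod.If_cases) auto
    also have "P \<inter> Act = Act" using ActP by auto
    finally show ?thesis by (simp add: k_def)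
  qed
  have cardS: "card S = fact (m - k) * m ^ k"
    by (simp add: S_def card_cartesian_product cardExt cardR)
  have finS: "finite S" using finR finC by (simp add: S_def Ext_def)
  have setT: "set_pmf T = Tl" using TN finTl by (simp add: T_def Tl_def)
  have pmfU: "pmf U x = 1 / real n * (1 / fact m) * (1 / real m) ^ card P" if x: "x \<in> S" for x
  proof -
    obtain \<omega> \<tau>c where xe: "x = (I, (\<omega>, \<tau>c))" and om: "\<omega> \<in> Ext" and tc: "\<tau>c \<in> R"
      using x by (auto simp: S_def)
    have omC: "\<omega> \<in> C" using om by (simp add: Ext_def)
    have tc1: "\<And>q. q \<notin> P \<Longrightarrow> \<tau>c q = dd" using tc by (auto simp: R_def PiE_dflt_def)
    have tc2: "\<And>q. q \<in> P \<Longrightarrow> \<tau>c q \<in> Tl" using tc tauT by (auto simp: R_def PiE_dflt_def P_def Tl_def split: if_splits)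
    have "pmf (Pi_pmf P dd (\<lambda>_. T)) \<tau>c = (\<Prod>q\<in>P. pmf T (\<tau>c q))"
      using finP tc1 by (intro pmf_Pi') auto
    also have "\<dots> = (\<Prod>q\<in>P. 1 / real m)"
      using tc2 finTl TN by (intro prod.cong refl) (simp add: T_def m_def Tl_def)
    finally have p1: "pmf (Pi_pmf P dd (\<lambda>_. T)) \<tau>c = (1 / real m) ^ card P" by simp
    have p2: "pmf (config_pmf n din dout) \<omega> = 1 / fact m"
      using omC finC CN cardC by (simp add: config_pmf_def C_def)
    have p3: "pmf (pmf_of_set {..<n}) I = 1 / real n" using I by (subst pmf_of_set) auto
    show ?thesis unfolding U_def xe pmf_pair p1 p2 p3 by simp
  qed
  have sub: "S \<subseteq> \<Phi> -` {(I, \<tau>)}"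
  proof
    fix x assume x: "x \<in> S"
    obtain \<omega> \<tau>c where xe: "x = (I, (\<omega>, \<tau>c))" and om: "\<omega> \<in> Ext" and tc: "\<tau>c \<in> R"
      using x by (auto simp: S_def)
    have omC: "\<omega> \<in> configs n din dout" using om by (simp add: Ext_def C_def)
    have "phi (PosS D h) din I (inv_into (Tails n dout) \<omega>) \<tau>c = \<tau>"
    proof (rule phi_preimage[OF omC])
      show "\<And>q. q \<in> PosS D h \<Longrightarrow> \<tau> q \<in> Tails n dout" using tauT by blast
      show "\<And>q. q \<notin> PosS D h \<Longrightarrow> \<tau> q = dd" using tauD by blast
      show "\<And>q. q \<in> PosS D h \<Longrightarrow> actT din I \<tau> q \<Longrightarrow> \<omega> (\<tau> q) = headT I \<tau> q"
        using om by (auto simp: Ext_def Act_def P_def)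
      show "\<And>q. q \<notin> PosS D h \<Longrightarrow> \<tau>c q = dd" using tc by (auto simp: R_def PiE_dflt_def P_def)
      show "\<And>q. q \<in> PosS D h \<Longrightarrow> \<not> actT din I \<tau> q \<Longrightarrow> \<tau>c q = \<tau> q"
        using tc by (auto simp: R_def PiE_dflt_def P_def Act_def)
    qed
    then show "x \<in> \<Phi> -` {(I, \<tau>)}" by (simp add: xe \<Phi>_def P_def Tl_def)
  qed
  have "pmf (map_pmf \<Phi> U) (I, \<tau>) = measure_pmf.prob U (\<Phi> -` {(I, \<tau>)})"
    by (simp add: pmf_map)
  also have "\<dots> \<ge> measure_pmf.prob U S"
    using sub by (intro measure_pmf.finite_measure_mono) auto
  finally have ge: "pmf (map_pmf \<Phi> U) (I, \<tau>) \<ge> measure_pmf.prob U S" .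
  have "measure_pmf.prob U S = (\<Sum>x\<in>S. pmf U x)" using finS by (rule measure_measure_pmf_finite)
  also have "\<dots> = real (card S) * (1 / real n * (1 / fact m) * (1 / real m) ^ card P)"
    using pmfU by simp
  finally have mS: "measure_pmf.prob U S = real (fact (m - k) * m ^ k) * (1 / real n * (1 / fact m) * (1 / real m) ^ card P)"
    by (simp add: cardS)
  have lhs: "pmf (pair_pmf (pmf_of_set {..<n}) (Pi_pmf P dd (\<lambda>_. T))) (I, \<tau>) = 1 / real n * (1 / real m) ^ card P"
  proof -
    have "pmf (Pi_pmf P dd (\<lambda>_. T)) \<tau> = (\<Prod>q\<in>P. pmf T (\<tau> q))"
      using finP tauD by (intro pmf_Pi') (auto simp: P_def)
    also have "\<dots> = (\<Prod>q\<in>P. 1 / real m)"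
      using tauT finTl TN by (intro prod.cong refl) (auto simp: T_def m_def Tl_def P_def)
    moreover have "pmf (pmf_of_set {..<n}) I = 1 / real n" using I by (subst pmf_of_set) auto
    ultimately show ?thesis by (simp add: pmf_pair)
  qed
  have fk: "real (fact m) \<le> real (fact (m - k) * m ^ k)"
    using fact_le_pow[OF kle] by (simp only: of_nat_le_iff)
  have "1 / real n * (1 / real m) ^ card P \<le>
        real (fact (m - k) * m ^ k) * (1 / real n * (1 / fact m) * (1 / real m) ^ card P)"
  proof -
    have f0: "(0::real) < fact m" by simp
    have "1 / real n * (1 / real m) ^ card P = (real (fact m) / fact m) * (1 / real n * (1 / real m) ^ card P)"
      using f0 by simp
    also have "\<dots> \<le> (real (fact (m - k) * m ^ k) / fact m) * (1 / real n * (1 / real m) ^ card P)"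
      using fk f0 by (intro mult_right_mono divide_right_mono) auto
    also have "\<dots> = real (fact (m - k) * m ^ k) * (1 / real n * (1 / fact m) * (1 / real m) ^ card P)"
      by simp
    finally show ?thesis .
  qed
  then show ?thesis using ge mS lhs by (simp add: U_def \<Phi>_def P_def T_def Tl_def)
qed




lemma pair_pmf_of_set:
  assumes "finite A" "A \<noteq> {}" "finite B" "B \<noteq> {}"
  shows "pair_pmf (pmf_of_set A) (pmf_of_set B) = pmf_of_set (A \<times> B)"
proof (rule pmf_eqI)
  fix x :: "'a \<times> 'b"
  obtain a b where x: "x = (a, b)" by (cases x) auto
  have pa: "pmf (pmf_of_set A) a = indicator A a / card A" using assms by (intro pmf_of_set) auto
  have pb: "pmf (pmf_of_set B) b = indicator B b / card B" using assms by (intro pmf_of_set) auto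
  have "A \<times> B \<noteq> {}" "finite (A \<times> B)" using assms by auto
  then have pab: "pmf (pmf_of_set (A \<times> B)) (a, b) = indicator (A \<times> B) (a, b) / card (A \<times> B)" by (intro pmf_of_set) auto
  show "pmf (pair_pmf (pmf_of_set A) (pmf_of_set B)) x = pmf (pmf_of_set (A \<times> B)) x"
    unfolding x pmf_pair pa pb pab by (simp add: indicator_def card_cartesian_product)
qed

lemma measure_pair_uniform:
  assumes "finite A" "A \<noteq> {}" "finite B" "B \<noteq> {}"
  shows "measure_pmf.prob (pair_pmf (pmf_of_set A) (pmf_of_set B)) E = card ((A \<times> B) \<inter> E) / (card A * card B)"
  using assms by (simp add: pair_pmf_of_set measure_pmf_of_set card_cartesian_product)

lemma card_Tails_fst: "i < n \<Longrightarrow> card {y \<in> Tails n dout. fst y = i} = dout i"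
proof -
  assume i: "i < n"
  have "{y \<in> Tails n dout. fst y = i} = {i} \<times> {..<dout i}" using i by (auto simp: Tails_def)
  then show ?thesis by (simp add: card_cartesian_product)
qed

lemma bad_bound:
  fixes P :: "nat list set" and D :: nat
  assumes TN: "Tails n dout \<noteq> {}" and n: "n > 0" and Dd: "\<And>i. i < n \<Longrightarrow> dout i \<le> D"
    and mD: "card (Tails n dout) \<le> n * D" and finP: "finite P"
  shows "measure_pmf.prob (pair_pmf (pmf_of_set {..<n}) (Pi_pmf P dd (\<lambda>_. pmf_of_set (Tails n dout))))
     (- {(I,\<tau>). (\<forall>q1\<in>P. \<forall>q2\<in>P. q1 \<noteq> q2 \<longrightarrow> fst (\<tau> q1) \<noteq> fst (\<tau> q2)) \<and> (\<forall>q\<in>P. fst (\<tau> q) \<noteq> I)})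
     \<le> real (card P) ^ 2 * D / card (Tails n dout)"
proof -
  define Tl where "Tl = Tails n dout"
  define m where "m = card Tl"
  define T where "T = pmf_of_set Tl"
  define UV where "UV = pmf_of_set {..<n}"
  define Pi where "Pi = Pi_pmf P dd (\<lambda>_. T)"
  define \<nu> where "\<nu> = pair_pmf UV Pi"
  define A where "A = (\<lambda>(q1,q2). {x::nat \<times> (nat list \<Rightarrow> nat \<times> nat). fst (snd x q1) = fst (snd x q2)})"
  define B where "B = (\<lambda>q. {x::nat \<times> (nat list \<Rightarrow> nat \<times> nat). fst (snd x q) = fst x})"
  define PP where "PP = {(q1, q2). q1 \<in> P \<and> q2 \<in> P \<and> q1 \<noteq> q2}"
  have finTl: "finite Tl" by (simp add: Tl_def finite_Tails)
  have TN': "Tl \<noteq> {}" using TN by (simp add: Tl_def)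
  have mpos: "m > 0" using finTl TN' by (simp add: m_def card_gt_0_iff)
  have finPP: "finite PP"
  proof -
    have "PP \<subseteq> P \<times> P" by (auto simp: PP_def)
    then show ?thesis using finP by (meson finite_SigmaI finite_subset)
  qed
  have cardPP: "card PP \<le> card P * card P"
  proof -
    have "PP \<subseteq> P \<times> P" by (auto simp: PP_def)
    then show ?thesis using finP by (metis card_cartesian_product card_mono finite_cartesian_product)
  qed
  have sub: "- {(I,\<tau>). (\<forall>q1\<in>P. \<forall>q2\<in>P. q1 \<noteq> q2 \<longrightarrow> fst (\<tau> q1) \<noteq> fst (\<tau> q2)) \<and> (\<forall>q\<in>P. fst (\<tau> q) \<noteq> I)}
      \<subseteq> (\<Union>pq\<in>PP. A pq) \<union> (\<Union>q\<in>P. B q)"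
    by (auto simp: A_def B_def PP_def)
  have pA: "measure_pmf.prob \<nu> (A pq) \<le> real D / real m" if pq: "pq \<in> PP" for pq
  proof -
    obtain q1 q2 where pqe: "pq = (q1, q2)" and q: "q1 \<in> P" "q2 \<in> P" "q1 \<noteq> q2"
      using pq by (auto simp: PP_def)
    have "measure_pmf.prob \<nu> (A pq) = measure_pmf.prob (map_pmf (\<lambda>x. (snd x q1, snd x q2)) \<nu>) {(x, y). fst x = fst y}"
      by (simp add: A_def pqe vimage_def)
    also have "map_pmf (\<lambda>x. (snd x q1, snd x q2)) \<nu> = map_pmf (\<lambda>f. (f q1, f q2)) Pi"
    proof -
      have "map_pmf (\<lambda>x. (snd x q1, snd x q2)) \<nu> = map_pmf (\<lambda>f. (f q1, f q2)) (map_pmf snd \<nu>)"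
        by (simp add: pmf.map_comp o_def)
      then show ?thesis by (simp add: \<nu>_def map_snd_pair_pmf)
    qed
    also have "\<dots> = pair_pmf T T"
      unfolding Pi_def by (rule Pi_pmf_two_components[OF finP q])
    also have "measure_pmf.prob (pair_pmf T T) {(x, y). fst x = fst y} =
        card ((Tl \<times> Tl) \<inter> {(x, y). fst x = fst y}) / (card Tl * card Tl)"
      unfolding T_def by (rule measure_pair_uniform[OF finTl TN' finTl TN'])
    also have "card ((Tl \<times> Tl) \<inter> {(x, y). fst x = fst y}) \<le> m * D"
    proof -
      have "(Tl \<times> Tl) \<inter> {(x, y). fst x = fst y} = Sigma Tl (\<lambda>x. {y \<in> Tl. fst y = fst x})" by auto
      then have "card ((Tl \<times> Tl) \<inter> {(x, y). fst x = fst y}) = (\<Sum>x\<in>Tl. card {y \<in> Tl. fst y = fst x})"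
        using finTl by (simp add: card_SigmaI)
      also have "\<dots> = (\<Sum>x\<in>Tl. dout (fst x))"
      proof (intro sum.cong refl)
        fix x assume "x \<in> Tl"
        then have "fst x < n" by (auto simp: Tl_def Tails_def)
        then show "card {y \<in> Tl. fst y = fst x} = dout (fst x)" unfolding Tl_def by (rule card_Tails_fst)
      qed
      also have "\<dots> \<le> (\<Sum>x\<in>Tl. D)"
        by (intro sum_mono) (auto simp: Tl_def Tails_def Dd)
      finally show ?thesis by (simp add: m_def)
    qed
    then have "real (card ((Tl \<times> Tl) \<inter> {(x, y). fst x = fst y})) / (card Tl * card Tl) \<le> real (m * D) / (m * m)"
      unfolding m_def[symmetric] by (intro divide_right_mono of_nat_mono) auto
    also have "\<dots> = real D / real m" using mpos by simp
    finally show ?thesis by (simp add: m_def)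
  qed
  have pB: "measure_pmf.prob \<nu> (B q) \<le> real D / real m" if q: "q \<in> P" for q
  proof -
    have "measure_pmf.prob \<nu> (B q) = measure_pmf.prob (map_pmf (\<lambda>x. (fst x, snd x q)) \<nu>) {(I, y). fst y = I}"
      by (simp add: B_def vimage_def case_prod_unfold)
    also have "map_pmf (\<lambda>x. (fst x, snd x q)) \<nu> = pair_pmf UV (map_pmf (\<lambda>f. f q) Pi)"
      using map_pair[of id "\<lambda>f. f q" UV Pi] by (simp add: \<nu>_def case_prod_unfold id_def)
    also have "map_pmf (\<lambda>f. f q) Pi = T"
      unfolding Pi_def using finP q by (simp add: Pi_pmf_component)
    also have "measure_pmf.prob (pair_pmf UV T) {(I, y). fst y = I} =
        card (({..<n} \<times> Tl) \<inter> {(I, y). fst y = I}) / (card {..<n} * card Tl)"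
      unfolding UV_def T_def using n by (intro measure_pair_uniform finTl TN') auto
    also have "card (({..<n} \<times> Tl) \<inter> {(I, y). fst y = I}) = m"
    proof -
      have "({..<n} \<times> Tl) \<inter> {(I, y). fst y = I} = (\<lambda>y. (fst y, y)) ` Tl"
        by (auto simp: Tl_def Tails_def image_iff)
      then show ?thesis by (simp add: card_image inj_on_def m_def)
    qed
    also have "real m / (card {..<n} * card Tl) = 1 / real n" using mpos by (simp add: m_def)
    also have "\<dots> \<le> real D / real m"
      using mD n mpos by (simp add: field_simps m_def Tl_def) (metis of_nat_le_iff of_nat_mult)
    finally show ?thesis .
  qed
  have "measure_pmf.prob \<nu> (- {(I,\<tau>). (\<forall>q1\<in>P. \<forall>q2\<in>P. q1 \<noteq> q2 \<longrightarrow> fst (\<tau> q1) \<noteq> fst (\<tau> q2)) \<and> (\<forall>q\<in>P. fst (\<tau> q) \<noteq> I)})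
     \<le> measure_pmf.prob \<nu> ((\<Union>pq\<in>PP. A pq) \<union> (\<Union>q\<in>P. B q))"
    using sub by (intro measure_pmf.finite_measure_mono) auto
  also have "\<dots> \<le> measure_pmf.prob \<nu> (\<Union>pq\<in>PP. A pq) + measure_pmf.prob \<nu> (\<Union>q\<in>P. B q)"
    by (rule measure_subadditive) auto
  also have "measure_pmf.prob \<nu> (\<Union>pq\<in>PP. A pq) \<le> (\<Sum>pq\<in>PP. measure_pmf.prob \<nu> (A pq))"
    using finPP by (intro measure_pmf.finite_measure_subadditive_finite) auto
  also have "\<dots> \<le> (\<Sum>pq\<in>PP. real D / real m)" by (intro sum_mono pA)
  also have "measure_pmf.prob \<nu> (\<Union>q\<in>P. B q) \<le> (\<Sum>q\<in>P. measure_pmf.prob \<nu> (B q))"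
    using finP by (intro measure_pmf.finite_measure_subadditive_finite) auto
  also have "\<dots> \<le> (\<Sum>q\<in>P. real D / real m)" by (intro sum_mono pB)
  also have "(\<Sum>pq\<in>PP. real D / real m) + (\<Sum>q\<in>P. real D / real m) = real (card PP + card P) * (real D / real m)"
    by (simp add: algebra_simps)
  also have "\<dots> \<le> real (card P) ^ 2 * D / m"
  proof -
    have "card PP + card P \<le> card P * card P"
    proof -
      have "PP \<subseteq> P \<times> P - (\<lambda>q. (q, q)) ` P" by (auto simp: PP_def)
      then have "card PP \<le> card (P \<times> P - (\<lambda>q. (q, q)) ` P)" using finP by (intro card_mono) auto
      also have "\<dots> = card P * card P - card P"
        using finP by (subst card_Diff_subset) (auto simp: card_cartesian_product card_image inj_on_def)
      finally show ?thesis using le_square[of "card P"] by linarith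
    qed
    then have "real (card PP + card P) \<le> real (card P * card P)" by (rule of_nat_mono)
    then have "real (card PP + card P) \<le> real (card P) ^ 2" by (simp add: power2_eq_square)
    then show ?thesis using mpos by (simp add: divide_right_mono mult_right_mono mult.assoc[symmetric]
        flip: times_divide_eq_right)
  qed
  finally show ?thesis by (simp add: \<nu>_def UV_def Pi_def T_def m_def Tl_def)
qed




lemma sum_strip_Wsum:
  "sum_list (map (\<lambda>(i,a). real n * real (din i) / M * a) (strip L)) = Wsum (\<lambda>v. real n * real (din v) / M) L"
  by (induction L) (auto simp: Wsum_def strip_def algebra_simps)

lemma env_law_eq:
  assumes n: "n > 0" and cards: "card (Tails n dout) = card (Heads n din)" and TN: "Tails n dout \<noteq> {}"
    and Dd: "\<And>v. v < n \<Longrightarrow> din v \<le> D"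
  shows "env_law n din dout h = map_pmf (\<lambda>(I,(\<omega>,\<tau>c)). (\<lambda>(I,\<tau>). map (\<lambda>g. sum_list (map (\<lambda>(i,a). real n * real (din i) / real (\<Sum>k<n. din k) * a) g))
         (map (\<lambda>s. strip (genT din dout I \<tau> s)) [0..<Suc h])) (I, phi (PosS D h) din I (inv_into (Tails n dout) \<omega>) \<tau>c))
      (pair_pmf (pmf_of_set {..<n}) (pair_pmf (config_pmf n din dout) (Pi_pmf (PosS D h) dd (\<lambda>_. pmf_of_set (Tails n dout)))))"
    (is "_ = map_pmf ?F (pair_pmf ?UV (pair_pmf ?CP ?Pi))")
proof -
  define vec where "vec = (\<lambda>\<omega> I. map (\<lambda>t. real n * pi_t n din dout \<omega> t I) [0..<Suc h])"
  have finC: "finite (configs n din dout)" unfolding configs_bijs by (intro finite_bijs finite_Tails finite_Heads)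
  have cardC: "card (configs n din dout) = fact (card (Tails n dout))"
    unfolding configs_bijs using cards by (intro card_bijs) (auto simp: finite_Tails finite_Heads)
  have CN: "configs n din dout \<noteq> {}" using cardC by (metis card.empty fact_nonzero)
  have setCP: "set_pmf ?CP = configs n din dout" using finC CN by (simp add: config_pmf_def)
  have setUV: "set_pmf ?UV = {..<n}" using n by (subst set_pmf_of_set) auto
  have key: "?F (I, (\<omega>, \<tau>c)) = vec \<omega> I" if I: "I < n" and om: "\<omega> \<in> configs n din dout" for I \<omega> \<tau>c
  proof -
    define \<sigma> where "\<sigma> = inv_into (Tails n dout) \<omega>"
    have Hs: "\<And>v c. v < n \<Longrightarrow> c < din v \<Longrightarrow> fst (\<sigma> (v, c)) < n"
    proof -
      fix v c assume "v < n" "c < din v"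
      then have "\<sigma> (v, c) \<in> Tails n dout" using sigma_in[OF om] by (simp add: \<sigma>_def)
      then show "fst (\<sigma> (v, c)) < n" by (auto simp: Tails_def split: prod.splits)
    qed
    show ?thesis
      unfolding vec_def
    proof (simp only: case_prod_conv map_map o_def, intro map_cong refl)
      fix s assume "s \<in> set [0..<Suc h]"
      then have sh: "s \<le> h" by auto
      have g: "genT din dout I (phi (PosS D h) din I \<sigma> \<tau>c) s = genG din dout I \<sigma> s"
        using genG_eq_genT[where din = din and \<sigma> = \<sigma> and D = D and n = n and h = h and dout = dout and I = I and \<tau>c = \<tau>c, OF I Hs Dd sh] by simp
      have w: "Wsum (\<lambda>v. real n * real (din v) / real (\<Sum>k<n. din k)) (genG din dout I \<sigma> s) = real n * pi_t n din dout \<omega> s I"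
        unfolding \<sigma>_def by (rule npi_Wsum[OF om I, symmetric])
      show "sum_list (map (\<lambda>(i,a). real n * real (din i) / real (\<Sum>k<n. din k) * a)
          (strip (genT din dout I (phi (PosS D h) din I (inv_into (Tails n dout) \<omega>) \<tau>c) s))) =
          real n * pi_t n din dout \<omega> s I"
        unfolding \<sigma>_def[symmetric] g sum_strip_Wsum w ..
    qed
  qed
  have "map_pmf ?F (pair_pmf ?UV (pair_pmf ?CP ?Pi)) =
      bind_pmf ?UV (\<lambda>I. bind_pmf ?CP (\<lambda>\<omega>. bind_pmf ?Pi (\<lambda>\<tau>c. return_pmf (?F (I, (\<omega>, \<tau>c))))))"
    by (simp add: map_pmf_def pair_pmf_def bind_assoc_pmf bind_return_pmf)
  also have "\<dots> = bind_pmf ?UV (\<lambda>I. bind_pmf ?CP (\<lambda>\<omega>. return_pmf (vec \<omega> I)))"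
    using key setUV setCP by (intro bind_pmf_cong refl) auto
  also have "\<dots> = bind_pmf ?CP (\<lambda>\<omega>. bind_pmf ?UV (\<lambda>I. return_pmf (vec \<omega> I)))"
    by (rule bind_commute_pmf)
  also have "\<dots> = env_law n din dout h"
    by (simp add: env_law_def map_pmf_def vec_def)
  finally show ?thesis ..
qed




lemma geom_lt: "(D::nat) \<ge> 2 \<Longrightarrow> (\<Sum>i\<le>h. D ^ i) < D ^ Suc h"
proof (induction h)
  case 0 then show ?case by simp
next
  case (Suc h)
  have "(\<Sum>i\<le>Suc h. D ^ i) = (\<Sum>i\<le>h. D ^ i) + D ^ Suc h" by simp
  also have "\<dots> < D ^ Suc h + D ^ Suc h" using Suc by simp
  also have "\<dots> \<le> D * D ^ Suc h" using Suc.prems by (simp add: mult_2[symmetric] mult_right_mono)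
  finally show ?case by simp
qed

theorem proposition6:
  fixes n :: nat and din dout :: "nat \<Rightarrow> nat" and m \<Delta> h :: nat
  assumes "n > 0"
    and "\<And>i. i < n \<Longrightarrow> din i \<ge> 2 \<and> dout i \<ge> 2"
    and "m = (\<Sum>i<n. din i)" and "m = (\<Sum>i<n. dout i)"
    and "\<Delta> = Max ((\<lambda>i. max (din i) (dout i)) ` {..<n})"
    and "h = nat \<lfloor>ln (real n) / (10 * ln (real \<Delta>))\<rfloor>"
  shows "tv_dist (env_law n din dout h) (M_law n din dout h) < real \<Delta> ^ (2*h+3) / real m"
proof -
  note n = assms(1) and deg = assms(2) and m1 = assms(3) and m2 = assms(4) and Dl = assms(5)
  define dd where "dd = ((0::nat), (0::nat))"
  define P where "P = PosS \<Delta> h"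
  define T where "T = pmf_of_set (Tails n dout)"
  define UV where "UV = pmf_of_set {..<n}"
  define Pi where "Pi = Pi_pmf P dd (\<lambda>_. T)"
  define \<nu> where "\<nu> = pair_pmf UV Pi"
  define U where "U = pair_pmf UV (pair_pmf (config_pmf n din dout) Pi)"
  define \<Phi> where "\<Phi> = (\<lambda>(I::nat,(\<omega>::nat\<times>nat\<Rightarrow>nat\<times>nat,\<tau>c::nat list\<Rightarrow>nat\<times>nat)). (I, phi P din I (inv_into (Tails n dout) \<omega>) \<tau>c))"
  define Gv where "Gv = (\<lambda>gs. map (\<lambda>g. sum_list (map (\<lambda>(i,a). real n * real (din i) / real (\<Sum>k<n. din k) * a) g)) gs)
      \<circ> (\<lambda>(I::nat,\<tau>::nat list\<Rightarrow>nat\<times>nat). map (\<lambda>s. strip (genT din dout I \<tau> s)) [0..<Suc h])"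
  define G where "G = {(I::nat,\<tau>::nat list\<Rightarrow>nat\<times>nat). (\<forall>q1\<in>P. \<forall>q2\<in>P. q1 \<noteq> q2 \<longrightarrow> fst (\<tau> q1) \<noteq> fst (\<tau> q2)) \<and> (\<forall>q\<in>P. fst (\<tau> q) \<noteq> I)}"
  have bnd: "din i \<le> \<Delta> \<and> dout i \<le> \<Delta>" if "i < n" for i
  proof -
    have "max (din i) (dout i) \<le> \<Delta>" unfolding Dl using that by (intro Max_ge) auto
    then show ?thesis by simp
  qed
  have D2: "\<Delta> \<ge> 2" using bnd[OF n] deg[OF n] by linarith
  have cT: "card (Tails n dout) = m" by (simp add: card_Tails m2)
  have cH: "card (Heads n din) = m" by (simp add: card_Heads m1)
  have mge: "m \<ge> 2 * n"
  proof -
    have "(\<Sum>i<n. 2) \<le> (\<Sum>i<n. dout i)" using deg by (intro sum_mono) auto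
    then show ?thesis using m2 by simp
  qed
  have mpos: "m > 0" using mge n by linarith
  have TN: "Tails n dout \<noteq> {}" using mpos cT by auto
  have mD: "card (Tails n dout) \<le> n * \<Delta>"
  proof -
    have "(\<Sum>i<n. dout i) \<le> (\<Sum>i<n. \<Delta>)" using bnd by (intro sum_mono) auto
    then show ?thesis using cT m2 by simp
  qed
  have finP: "finite P" by (simp add: P_def finite_PosS)
  have gp: "gens n din dout h = map_pmf (\<lambda>(I,\<tau>). map (\<lambda>s. strip (genT din dout I \<tau> s)) [0..<Suc h])
     (pair_pmf (pmf_of_set {..<n}) (Pi_pmf (PosS \<Delta> h) dd (\<lambda>_. pmf_of_set (Tails n dout))))"
    by (rule gens_Pi[OF n TN]) (use bnd in auto)
  have M: "M_law n din dout h = map_pmf Gv \<nu>"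
    unfolding M_law_def gp \<nu>_def UV_def Pi_def T_def P_def pmf.map_comp Gv_def ..
  have ee: "env_law n din dout h = map_pmf (\<lambda>(I,(\<omega>,\<tau>c)). (\<lambda>(I,\<tau>). map (\<lambda>g. sum_list (map (\<lambda>(i,a). real n * real (din i) / real (\<Sum>k<n. din k) * a) g))
         (map (\<lambda>s. strip (genT din dout I \<tau> s)) [0..<Suc h])) (I, phi (PosS \<Delta> h) din I (inv_into (Tails n dout) \<omega>) \<tau>c))
      (pair_pmf (pmf_of_set {..<n}) (pair_pmf (config_pmf n din dout) (Pi_pmf (PosS \<Delta> h) dd (\<lambda>_. pmf_of_set (Tails n dout)))))"
    by (rule env_law_eq[OF n _ TN]) (use bnd cT cH in auto)
  have E: "env_law n din dout h = map_pmf Gv (map_pmf \<Phi> U)"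
    unfolding ee U_def UV_def Pi_def T_def P_def pmf.map_comp
  proof (intro map_pmf_cong refl)
    fix x :: "nat \<times> (nat \<times> nat \<Rightarrow> nat \<times> nat) \<times> (nat list \<Rightarrow> nat \<times> nat)"
    obtain I \<omega> \<tau>c where x: "x = (I, \<omega>, \<tau>c)" by (cases x) auto
    show "(\<lambda>(I,(\<omega>,\<tau>c)). (\<lambda>(I,\<tau>). map (\<lambda>g. sum_list (map (\<lambda>(i,a). real n * real (din i) / real (\<Sum>k<n. din k) * a) g))
         (map (\<lambda>s. strip (genT din dout I \<tau> s)) [0..<Suc h])) (I, phi (PosS \<Delta> h) din I (inv_into (Tails n dout) \<omega>) \<tau>c)) x
       = (Gv \<circ> \<Phi>) x"
      unfolding x Gv_def \<Phi>_def P_def o_def case_prod_conv by (rule refl)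
  qed
  have finT: "finite (Tails n dout)" by (rule finite_Tails)
  have setT: "set_pmf T = Tails n dout" using TN finT by (simp add: T_def)
  have setPi: "set_pmf Pi = PiE_dflt P dd (\<lambda>_. Tails n dout)"
    unfolding Pi_def by (subst set_Pi_pmf) (auto simp: finP setT o_def)
  have setUV: "set_pmf UV = {..<n}" using n unfolding UV_def by (subst set_pmf_of_set) auto
  have fin\<nu>: "finite (set_pmf \<nu>)"
    unfolding \<nu>_def set_pair_pmf setPi setUV using finP finT by (intro finite_cartesian_product finite_PiE_dflt) auto
  have Gc: "\<forall>b\<in>G. pmf \<nu> b \<le> pmf (map_pmf \<Phi> U) b"
  proof
    fix b assume bG: "b \<in> G"
    obtain I \<tau> where b: "b = (I, \<tau>)" by (cases b) auto
    show "pmf \<nu> b \<le> pmf (map_pmf \<Phi> U) b"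
    proof (cases "b \<in> set_pmf \<nu>")
      case False
      then show ?thesis by (simp add: set_pmf_iff)
    next
      case True
      then have I: "I < n" and tau: "\<tau> \<in> PiE_dflt P dd (\<lambda>_. Tails n dout)"
        unfolding \<nu>_def set_pair_pmf setPi setUV b by auto
      have "pmf (pair_pmf (pmf_of_set {..<n}) (Pi_pmf (PosS \<Delta> h) dd (\<lambda>_. pmf_of_set (Tails n dout)))) (I, \<tau>) \<le>
        pmf (map_pmf (\<lambda>(I,(\<omega>,\<tau>c)). (I, phi (PosS \<Delta> h) din I (inv_into (Tails n dout) \<omega>) \<tau>c))
          (pair_pmf (pmf_of_set {..<n}) (pair_pmf (config_pmf n din dout)
            (Pi_pmf (PosS \<Delta> h) dd (\<lambda>_. pmf_of_set (Tails n dout)))))) (I, \<tau>)"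
      proof (rule pmf_mu_ge)
        show "card (Tails n dout) = card (Heads n din)" using cT cH by simp
        show "Tails n dout \<noteq> {}" by (rule TN)
        show "I < n" by (rule I)
        show "\<forall>q\<in>PosS \<Delta> h. \<tau> q \<in> Tails n dout" using tau by (auto simp: PiE_dflt_def P_def)
        show "\<forall>q. q \<notin> PosS \<Delta> h \<longrightarrow> \<tau> q = dd" using tau by (auto simp: PiE_dflt_def P_def)
        show "\<forall>q1\<in>PosS \<Delta> h. \<forall>q2\<in>PosS \<Delta> h. q1 \<noteq> q2 \<longrightarrow> fst (\<tau> q1) \<noteq> fst (\<tau> q2)"
          using bG b by (auto simp: G_def P_def)
        show "\<forall>q\<in>PosS \<Delta> h. fst (\<tau> q) \<noteq> I" using bG b by (auto simp: G_def P_def)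
      qed
      then show ?thesis
        by (simp add: b \<nu>_def UV_def Pi_def T_def P_def \<Phi>_def U_def)
    qed
  qed
  have "tv_dist (env_law n din dout h) (M_law n din dout h) \<le> measure_pmf.prob \<nu> (-G)"
    unfolding E M by (rule tv_map_le[OF fin\<nu> Gc])
  also have "\<dots> \<le> real (card P) ^ 2 * \<Delta> / card (Tails n dout)"
    unfolding \<nu>_def UV_def Pi_def T_def G_def
    by (rule bad_bound[OF TN n _ mD finP]) (use bnd in auto)
  also have "\<dots> < real \<Delta> ^ (2*h+3) / real m"
  proof -
    have "card P \<le> card {xs. set xs \<subseteq> {..<\<Delta>} \<and> length xs \<le> h}"
      by (intro card_mono finite_lists_length_le) (auto simp: P_def PosS_def)
    also have "\<dots> = (\<Sum>i\<le>h. \<Delta> ^ i)" by (simp add: card_lists_length_le)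
    also have "\<dots> < \<Delta> ^ Suc h" by (rule geom_lt[OF D2])
    finally have cP: "card P < \<Delta> ^ Suc h" .
    then have "card P ^ 2 < (\<Delta> ^ Suc h) ^ 2" by (simp add: power_strict_mono)
    also have "(\<Delta> ^ Suc h) ^ 2 = \<Delta> ^ (Suc h * 2)" by (rule power_mult[symmetric])
    also have "Suc h * 2 = 2*h+2" by simp
    finally have "card P ^ 2 * \<Delta> < \<Delta> ^ (2*h+2) * \<Delta>" using D2 by simp
    also have "\<Delta> ^ (2*h+2) * \<Delta> = \<Delta> ^ (2*h+3)"
    proof -
      have "2*h+3 = Suc (2*h+2)" by simp
      then show ?thesis by (simp only: power_Suc2)
    qed
    finally have "card P ^ 2 * \<Delta> < \<Delta> ^ (2*h+3)" .
    then have "real (card P ^ 2 * \<Delta>) < real (\<Delta> ^ (2*h+3))" by (simp only: of_nat_less_iff)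
    then have "real (card P) ^ 2 * real \<Delta> < real \<Delta> ^ (2*h+3)" by (simp only: of_nat_mult of_nat_power)
    then show ?thesis using mpos cT by (simp add: divide_strict_right_mono)
  qed
  finally show ?thesis .
qed



end
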